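(* Let $n\ge2$, let $p\in\{2,\dots,n\}$, and let $\mathcal V_p\subseteq M_n(\mathbb C)$ be the subspace of all matrices having zero entries at positions $(1,p),(1,p+1),\dots,(1,n)$. If $p\ge3$, then $\mathcal V_p$ contains no nonzero matrix that is left-symmetric relative to $\mathcal V_p$. If $p=2$, then $\mathcal V_2$ contains nonzero matrices that are left-symmetric relative to $\mathcal V_2$, and all of them have rank one; moreover, if $p=2$ and $n\ge3$, then $A\in\mathcal V_2$ is left-symmetric relative to $\mathcal V_2$ if and only if $A\in\mathbb C E_{11}$.
   Context: $M_n(\mathbb C)$ carries the operator (spectral) norm; $E_{ij}$ are the matrix units. $A\perp B$ (Birkhoff–James orthogonality) means $\|A+\lambda B\|\ge\|A\|$ for all $\lambda\in\mathbb C$. For a subset $\mathcal S$, an element $A\in\mathcal S$ is left-symmetric relative to $\mathcal S$ if for every $B\in\mathcal S$, $A\perp B$ implies $B\perp A$. *)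

theory Defs
  imports Complex_Main "Jordan_Normal_Form.DL_Rank"
begin

(* Matrices in M_n(C) are "complex mat" in carrier_mat n n; indices are 0-based,
   so the paper's entry (i,j) is  A $$ (i-1, j-1). *)

definition vnorm :: "complex vec \<Rightarrow> real" where
  "vnorm v = sqrt (\<Sum>i<dim_vec v. (cmod (v $ i))\<^sup>2)"

definition opnorm :: "complex mat \<Rightarrow> real" where
  "opnorm A = Sup {vnorm (A *\<^sub>v v) | v. v \<in> carrier_vec (dim_col A) \<and> vnorm v \<le> 1}"

definition bj_orth :: "complex mat \<Rightarrow> complex mat \<Rightarrow> bool" where
  "bj_orth A B \<longleftrightarrow> (\<forall>c::complex. opnorm (A + c \<cdot>\<^sub>m B) \<ge> opnorm A)"

definition left_symmetric :: "complex mat set \<Rightarrow> complex mat \<Rightarrow> bool" where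
  "left_symmetric S A \<longleftrightarrow> A \<in> S \<and> (\<forall>B\<in>S. bj_orth A B \<longrightarrow> bj_orth B A)"

definition Vp :: "nat \<Rightarrow> nat \<Rightarrow> complex mat set" where
  "Vp n p = {A \<in> carrier_mat n n. \<forall>k. p \<le> k \<and> k \<le> n \<longrightarrow> A $$ (0, k - 1) = 0}"

definition E11 :: "nat \<Rightarrow> complex mat" where
  "E11 n = mat n n (\<lambda>(i, j). if i = 0 \<and> j = 0 then 1 else 0)"

end

theory Submission
  imports Defs "HOL-Analysis.Function_Topology" "HOL-Analysis.L2_Norm" "HOL-Analysis.Topology_Euclidean_Space" "Jordan_Normal_Form.DL_Rank_Submatrix"
begin


definition ip :: "complex Matrix.vec \<Rightarrow> complex Matrix.vec \<Rightarrow> complex" where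
  "ip v w = (\<Sum>i<dim_vec v. v $ i * cnj (w $ i))"

definition nsq :: "complex Matrix.vec \<Rightarrow> real" where
  "nsq v = (\<Sum>i<dim_vec v. (cmod (v $ i))\<^sup>2)"

lemma nsq_nonneg: "nsq v \<ge> 0"
  unfolding nsq_def by (simp add: sum_nonneg)

lemma vnorm_nsq: "vnorm v = sqrt (nsq v)"
  unfolding vnorm_def nsq_def by simp

lemma vnorm_sq: "(vnorm v)\<^sup>2 = nsq v"
  by (simp add: vnorm_nsq nsq_nonneg)

lemma vnorm_nonneg: "vnorm v \<ge> 0"
  by (simp add: vnorm_nsq nsq_nonneg)

lemma vnorm_L2: "vnorm v = L2_set (\<lambda>i. cmod (v $ i)) {..<dim_vec v}"
  unfolding vnorm_def L2_set_def by simp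

lemma ip_self: "ip v v = of_real (nsq v)"
  unfolding ip_def nsq_def of_real_sum
  by (rule sum.cong) (simp_all only: complex_norm_square)

lemma ip_cnj: "dim_vec w = dim_vec v \<Longrightarrow> ip w v = cnj (ip v w)"
  unfolding ip_def by (simp add: mult.commute)

lemma cs_ineq:
  assumes "dim_vec w = dim_vec v"
  shows "cmod (ip v w) \<le> vnorm v * vnorm w"
proof -
  have "cmod (ip v w) \<le> (\<Sum>i<dim_vec v. cmod (v $ i) * cmod (w $ i))"
    unfolding ip_def by (rule order_trans[OF norm_sum]) (simp add: norm_mult)
  also have "\<dots> = (\<Sum>i<dim_vec v. \<bar>cmod (v $ i)\<bar> * \<bar>cmod (w $ i)\<bar>)" by simp
  also have "\<dots> \<le> L2_set (\<lambda>i. cmod (v $ i)) {..<dim_vec v} * L2_set (\<lambda>i. cmod (w $ i)) {..<dim_vec v}"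
    by (rule L2_set_mult_ineq)
  also have "\<dots> = vnorm v * vnorm w" using assms by (simp add: vnorm_L2)
  finally show ?thesis .
qed

lemma ip_add_left: "dim_vec u = dim_vec v \<Longrightarrow> ip (u + v) w = ip u w + ip v w"
  unfolding ip_def by (simp add: distrib_right sum.distrib)

lemma ip_add_right: "dim_vec u = dim_vec v \<Longrightarrow> dim_vec w = dim_vec u \<Longrightarrow> ip w (u + v) = ip w u + ip w v"
  unfolding ip_def by (simp add: distrib_left sum.distrib)

lemma ip_smult_left: "ip (c \<cdot>\<^sub>v v) w = c * ip v w"
  unfolding ip_def by (simp add: sum_distrib_left mult.assoc)

lemma ip_smult_right: "dim_vec w = dim_vec v \<Longrightarrow> ip w (c \<cdot>\<^sub>v v) = cnj c * ip w v"
  unfolding ip_def by (simp add: sum_distrib_left algebra_simps)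

lemma nsq_add: assumes "dim_vec u = dim_vec v"
  shows "nsq (u + v) = nsq u + nsq v + 2 * Re (ip u v)"
proof -
  have "of_real (nsq (u+v)) = ip (u+v) (u+v)" by (simp add: ip_self)
  also have "\<dots> = ip u u + ip v v + (ip u v + ip v u)"
    using assms by (simp add: ip_add_left ip_add_right)
  also have "ip v u = cnj (ip u v)" by (rule ip_cnj) (use assms in simp)
  finally have "of_real (nsq (u+v)) = of_real (nsq u) + of_real (nsq v) + (ip u v + cnj (ip u v))"
    by (simp add: ip_self)
  then have "Re (of_real (nsq (u+v))) = Re (of_real (nsq u) + of_real (nsq v) + (ip u v + cnj (ip u v)))"
    by simp
  then show ?thesis by simp
qed

lemma nsq_smult: "nsq (c \<cdot>\<^sub>v v) = (cmod c)\<^sup>2 * nsq v"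
  unfolding nsq_def by (simp add: norm_mult power_mult_distrib sum_distrib_left)

lemma vnorm_smult: "vnorm (c \<cdot>\<^sub>v v) = cmod c * vnorm v"
  by (simp add: vnorm_nsq nsq_smult real_sqrt_mult)

lemma nsq_zero_iff: "nsq v = 0 \<longleftrightarrow> v = 0\<^sub>v (dim_vec v)"
proof
  assume h: "nsq v = 0"
  have "\<forall>i\<in>{..<dim_vec v}. (cmod (v $ i))\<^sup>2 = 0"
    using h unfolding nsq_def by (subst sum_nonneg_eq_0_iff[symmetric]) auto
  then show "v = 0\<^sub>v (dim_vec v)" by (intro eq_vecI) auto
next
  have z: "nsq (0\<^sub>v m) = 0" for m by (simp add: nsq_def)
  assume "v = 0\<^sub>v (dim_vec v)"
  then show "nsq v = 0" using z by metis
qed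

lemma mv_index: assumes "A \<in> carrier_mat n n" "v \<in> carrier_vec n" "i < n"
  shows "(A *\<^sub>v v) $ i = (\<Sum>j<n. A $$ (i,j) * v $ j)"
  using assms by (auto simp: scalar_prod_def atLeast0LessThan intro!: sum.cong)

lemma mv_dim[simp]: "dim_vec (A *\<^sub>v v) = dim_row A" by simp

lemma smult_mv: assumes "(A::complex mat) \<in> carrier_mat n n" "v \<in> carrier_vec n"
  shows "(c \<cdot>\<^sub>m A) *\<^sub>v v = c \<cdot>\<^sub>v (A *\<^sub>v v)"
  using assms by (intro eq_vecI) (auto simp del: index_mult_mat_vec simp: mv_index[of "c \<cdot>\<^sub>m A" n] mv_index[of A n] sum_distrib_left mult.assoc)

lemma mv_smult: assumes "(A::complex mat) \<in> carrier_mat n n" "v \<in> carrier_vec n"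
  shows "A *\<^sub>v (c \<cdot>\<^sub>v v) = c \<cdot>\<^sub>v (A *\<^sub>v v)"
  using assms by (intro eq_vecI) (auto simp del: index_mult_mat_vec simp: mv_index sum_distrib_left mult.left_commute intro!: sum.cong)

lemma mv_bound: assumes A: "A \<in> carrier_mat n n" and v: "v \<in> carrier_vec n"
  shows "vnorm (A *\<^sub>v v) \<le> sqrt (\<Sum>i<n. \<Sum>j<n. (cmod (A $$ (i,j)))\<^sup>2) * vnorm v"
proof -
  have row: "(cmod ((A *\<^sub>v v) $ i))\<^sup>2 \<le> (\<Sum>j<n. (cmod (A $$ (i,j)))\<^sup>2) * nsq v" if i: "i < n" for i
  proof -
    have "cmod ((A *\<^sub>v v) $ i) \<le> (\<Sum>j<n. \<bar>cmod (A $$ (i,j))\<bar> * \<bar>cmod (v $ j)\<bar>)"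
      using A v i by (simp del: index_mult_mat_vec add: mv_index) (rule order_trans[OF norm_sum], simp add: norm_mult)
    also have "\<dots> \<le> L2_set (\<lambda>j. cmod (A $$ (i,j))) {..<n} * L2_set (\<lambda>j. cmod (v $ j)) {..<n}"
      by (rule L2_set_mult_ineq)
    finally have le: "cmod ((A *\<^sub>v v) $ i) \<le> L2_set (\<lambda>j. cmod (A $$ (i,j))) {..<n} * L2_set (\<lambda>j. cmod (v $ j)) {..<n}" .
    have "(cmod ((A *\<^sub>v v) $ i))\<^sup>2 \<le> (L2_set (\<lambda>j. cmod (A $$ (i,j))) {..<n} * L2_set (\<lambda>j. cmod (v $ j)) {..<n})\<^sup>2"
      by (rule power_mono[OF le]) simp
    also have "\<dots> = (\<Sum>j<n. (cmod (A $$ (i,j)))\<^sup>2) * nsq v"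
      using v by (simp add: power_mult_distrib L2_set_def nsq_def sum_nonneg)
    finally show ?thesis .
  qed
  have "nsq (A *\<^sub>v v) = (\<Sum>i<n. (cmod ((A *\<^sub>v v) $ i))\<^sup>2)"
    using A by (simp add: nsq_def del: index_mult_mat_vec)
  also have "\<dots> \<le> (\<Sum>i<n. (\<Sum>j<n. (cmod (A $$ (i,j)))\<^sup>2) * nsq v)"
    by (intro sum_mono row) simp
  finally have "nsq (A *\<^sub>v v) \<le> (\<Sum>i<n. (\<Sum>j<n. (cmod (A $$ (i,j)))\<^sup>2) * nsq v)" .
  also have "\<dots> = (\<Sum>i<n. \<Sum>j<n. (cmod (A $$ (i,j)))\<^sup>2) * nsq v"
    by (simp add: sum_distrib_right)
  finally have "sqrt (nsq (A *\<^sub>v v)) \<le> sqrt ((\<Sum>i<n. \<Sum>j<n. (cmod (A $$ (i,j)))\<^sup>2) * nsq v)"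
    by (rule real_sqrt_le_mono)
  then show ?thesis by (simp add: vnorm_nsq real_sqrt_mult)
qed

definition opset :: "complex mat \<Rightarrow> real set" where
  "opset A = {vnorm (A *\<^sub>v v) | v. v \<in> carrier_vec (dim_col A) \<and> vnorm v \<le> 1}"

lemma opnorm_opset: "opnorm A = Sup (opset A)"
  unfolding opnorm_def opset_def by simp

lemma opset_bdd: assumes "A \<in> carrier_mat n n" shows "bdd_above (opset A)"
proof -
  let ?C = "sqrt (\<Sum>i<n. \<Sum>j<n. (cmod (A $$ (i,j)))\<^sup>2)"
  have "\<forall>r\<in>opset A. r \<le> ?C"
  proof
    fix r assume "r \<in> opset A"
    then obtain v where v: "v \<in> carrier_vec n" "vnorm v \<le> 1" and r: "r = vnorm (A *\<^sub>v v)"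
      using assms unfolding opset_def by auto
    have "r \<le> ?C * vnorm v" using mv_bound[OF assms v(1)] r by simp
    also have "\<dots> \<le> ?C * 1" by (rule mult_left_mono[OF v(2)]) (simp add: sum_nonneg)
    finally show "r \<le> ?C" by simp
  qed
  then show ?thesis by (auto simp: bdd_above_def)
qed

lemma opnorm_ge: assumes "A \<in> carrier_mat n n" "v \<in> carrier_vec n" "vnorm v \<le> 1"
  shows "vnorm (A *\<^sub>v v) \<le> opnorm A"
  unfolding opnorm_opset
  by (rule cSup_upper[OF _ opset_bdd[OF assms(1)]]) (use assms in \<open>auto simp: opset_def\<close>)

lemma opnorm_le: assumes "A \<in> carrier_mat n n"
  and "\<And>v. v \<in> carrier_vec n \<Longrightarrow> vnorm v \<le> 1 \<Longrightarrow> vnorm (A *\<^sub>v v) \<le> c"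
  shows "opnorm A \<le> c"
  unfolding opnorm_opset
proof (rule cSup_least)
  show "opset A \<noteq> {}" using assms(1) unfolding opset_def
    by (auto intro!: exI[of _ "0\<^sub>v n"] simp: vnorm_def)
  show "\<And>r. r \<in> opset A \<Longrightarrow> r \<le> c" using assms unfolding opset_def by auto
qed

lemma opnorm_nonneg: assumes "A \<in> carrier_mat n n" shows "opnorm A \<ge> 0"
proof -
  have "vnorm (A *\<^sub>v 0\<^sub>v n) \<le> opnorm A" by (rule opnorm_ge[OF assms]) (auto simp: vnorm_def)
  then show ?thesis using vnorm_nonneg[of "A *\<^sub>v 0\<^sub>v n"] by linarith
qed

lemma opnorm_scaled: assumes A: "A \<in> carrier_mat n n" and v: "v \<in> carrier_vec n"
  shows "vnorm (A *\<^sub>v v) \<le> opnorm A * vnorm v"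
proof (cases "vnorm v = 0")
  case True
  then have "nsq v = 0" by (simp add: vnorm_nsq)
  then have "v = 0\<^sub>v n" using v nsq_zero_iff by auto
  then show ?thesis using A True by (simp add: vnorm_def)
next
  case False
  then have pos: "vnorm v > 0" using vnorm_nonneg[of v] by simp
  let ?u = "complex_of_real (1 / vnorm v) \<cdot>\<^sub>v v"
  have u: "?u \<in> carrier_vec n" using v by simp
  have "vnorm ?u = 1" using pos by (simp add: vnorm_smult norm_divide)
  then have "vnorm (A *\<^sub>v ?u) \<le> opnorm A" using opnorm_ge[OF A u] by simp
  moreover have "vnorm (A *\<^sub>v ?u) = vnorm (A *\<^sub>v v) / vnorm v"
    using A v pos by (simp add: mv_smult vnorm_smult norm_divide)
  ultimately show ?thesis using pos by (simp add: divide_le_eq)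
qed

lemma opnorm_mono: assumes "A \<in> carrier_mat n n" "B \<in> carrier_mat n n"
  and "\<And>v. v \<in> carrier_vec n \<Longrightarrow> vnorm (A *\<^sub>v v) \<le> vnorm (B *\<^sub>v v)"
  shows "opnorm A \<le> opnorm B"
  by (rule opnorm_le[OF assms(1)]) (meson assms opnorm_ge order_trans)


lemma exists_max:
  assumes A: "A \<in> carrier_mat n n"
  shows "\<exists>x\<in>carrier_vec n. vnorm x \<le> 1 \<and> vnorm (A *\<^sub>v x) = opnorm A"
proof -
  define S where "S = PiE UNIV (\<lambda>i::nat. if i < n then cball (0::complex) 1 else {0})"
  define h where "h = (\<lambda>g::nat \<Rightarrow> complex. (\<Sum>i<n. (cmod (g i))\<^sup>2))"
  define F where "F = (\<lambda>g::nat \<Rightarrow> complex. sqrt (\<Sum>i<n. (cmod (\<Sum>j<n. A $$ (i,j) * g j))\<^sup>2))"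
  define K where "K = S \<inter> {g. h g \<le> 1}"
  have ci: "continuous_on X (\<lambda>g::nat \<Rightarrow> complex. g i)" for X i
    by (rule continuous_on_subset[OF continuous_on_product_coordinates]) simp
  have "compactin (product_topology (\<lambda>i. euclidean) UNIV) S"
    unfolding S_def by (subst compactin_PiE) (auto simp: compactin_euclidean_iff)
  then have cS: "compact S" by (simp add: euclidean_product_topology compactin_euclidean_iff)
  have "continuous_on UNIV h" unfolding h_def by (intro continuous_intros ci)
  then have "closed {g. h g \<le> 1}" by (intro closed_Collect_le continuous_intros)
  then have cK: "compact K" unfolding K_def using cS by (rule compact_Int_closed[rotated])
  have K0: "(\<lambda>_. 0) \<in> K" unfolding K_def S_def h_def by auto
  have cF: "continuous_on K F" unfolding F_def by (intro continuous_intros ci)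
  obtain g0 where g0: "g0 \<in> K" and gmax: "\<And>g. g \<in> K \<Longrightarrow> F g \<le> F g0"
    using continuous_attains_sup[OF cK _ cF] K0 by blast
  define x where "x = Matrix.vec n g0"
  have x: "x \<in> carrier_vec n" unfolding x_def by simp
  have Fv: "F (\<lambda>i. if i < n then v $ i else 0) = vnorm (A *\<^sub>v v)" if v: "v \<in> carrier_vec n" for v
  proof -
    have "(\<Sum>j<n. A $$ (i,j) * (if j < n then v $ j else 0)) = (A *\<^sub>v v) $ i" if "i < n" for i
      using A v that by (simp del: index_mult_mat_vec add: mv_index)
    then show ?thesis unfolding F_def vnorm_def using A by simp
  qed
  have "vnorm x \<le> 1" using g0 unfolding K_def h_def x_def vnorm_def by simp
  moreover have Fx: "F g0 = vnorm (A *\<^sub>v x)"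
  proof -
    have "(\<lambda>i. if i < n then x $ i else 0) = (\<lambda>i. if i < n then g0 i else 0)" unfolding x_def by auto
    moreover have "F (\<lambda>i. if i < n then g0 i else 0) = F g0" unfolding F_def by simp
    ultimately show ?thesis using Fv[OF x] by simp
  qed
  moreover have "opnorm A \<le> F g0"
  proof (rule opnorm_le[OF A])
    fix v assume v: "v \<in> carrier_vec n" and v1: "vnorm v \<le> 1"
    have nv: "nsq v \<le> 1" using v1 by (simp add: vnorm_nsq)
    have "(\<lambda>i. if i < n then v $ i else 0) \<in> K"
    proof -
      have "cmod (v $ i) \<le> 1" if i: "i < n" for i
      proof -
        have "(cmod (v $ i))\<^sup>2 \<le> nsq v" unfolding nsq_def using v i
          by (intro member_le_sum) auto
        then have "(cmod (v $ i))\<^sup>2 \<le> 1\<^sup>2" using nv by simp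
        then show ?thesis by (rule power2_le_imp_le) simp
      qed
      moreover have "h (\<lambda>i. if i < n then v $ i else 0) = nsq v"
        unfolding h_def nsq_def using v by simp
      ultimately show ?thesis unfolding K_def S_def using nv by auto
    qed
    then show "vnorm (A *\<^sub>v v) \<le> F g0" using gmax Fv[OF v] by metis
  qed
  moreover have "vnorm (A *\<^sub>v x) \<le> opnorm A" if "vnorm x \<le> 1" using opnorm_ge[OF A x that] .
  ultimately show ?thesis using x by (intro bexI[of _ x]) auto
qed

lemma exists_unit_max:
  assumes A: "A \<in> carrier_mat n n" and pos: "opnorm A > 0"
  shows "\<exists>x\<in>carrier_vec n. vnorm x = 1 \<and> vnorm (A *\<^sub>v x) = opnorm A"
proof -
  obtain x where x: "x \<in> carrier_vec n" "vnorm x \<le> 1" "vnorm (A *\<^sub>v x) = opnorm A"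
    using exists_max[OF A] by blast
  have "opnorm A \<le> opnorm A * vnorm x" using opnorm_scaled[OF A x(1)] x(3) by simp
  then have "vnorm x \<ge> 1" using pos by simp
  then show ?thesis using x by (intro bexI[of _ x]) auto
qed

lemma mv_add_smult: assumes "(A::complex mat) \<in> carrier_mat n n" "B \<in> carrier_mat n n" "v \<in> carrier_vec n"
  shows "(A + c \<cdot>\<^sub>m B) *\<^sub>v v = A *\<^sub>v v + c \<cdot>\<^sub>v (B *\<^sub>v v)"
  using assms by (simp add: add_mult_distrib_mat_vec[of _ n n] smult_mv)

lemma orth_by_max:
  assumes A: "A \<in> carrier_mat n n" and B: "B \<in> carrier_mat n n"
    and x: "x \<in> carrier_vec n" "vnorm x \<le> 1" "vnorm (A *\<^sub>v x) = opnorm A"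
    and o: "ip (A *\<^sub>v x) (B *\<^sub>v x) = 0"
  shows "bj_orth A B"
  unfolding bj_orth_def
proof
  fix c :: complex
  have e: "(A + c \<cdot>\<^sub>m B) *\<^sub>v x = A *\<^sub>v x + c \<cdot>\<^sub>v (B *\<^sub>v x)" using mv_add_smult[OF A B x(1)] .
  have "nsq ((A + c \<cdot>\<^sub>m B) *\<^sub>v x) = nsq (A *\<^sub>v x) + (cmod c)\<^sup>2 * nsq (B *\<^sub>v x)"
    unfolding e using A B o by (subst nsq_add) (auto simp: nsq_smult ip_smult_right)
  then have "nsq (A *\<^sub>v x) \<le> nsq ((A + c \<cdot>\<^sub>m B) *\<^sub>v x)" using nsq_nonneg[of "B *\<^sub>v x"] by simp
  then have "vnorm (A *\<^sub>v x) \<le> vnorm ((A + c \<cdot>\<^sub>m B) *\<^sub>v x)" by (simp add: vnorm_nsq)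
  also have "\<dots> \<le> opnorm (A + c \<cdot>\<^sub>m B)" using A B x by (intro opnorm_ge[of _ n]) auto
  finally show "opnorm A \<le> opnorm (A + c \<cdot>\<^sub>m B)" using x(3) by simp
qed


lemma ip_zero_sym: "dim_vec w = dim_vec v \<Longrightarrow> ip v w = 0 \<Longrightarrow> ip w v = 0"
  using ip_cnj[of w v] by simp

lemma nsq_le_opnorm: assumes A: "A \<in> carrier_mat n n" and v: "v \<in> carrier_vec n"
  shows "nsq (A *\<^sub>v v) \<le> (opnorm A)\<^sup>2 * nsq v"
proof -
  have "vnorm (A *\<^sub>v v) \<le> opnorm A * vnorm v" by (rule opnorm_scaled[OF A v])
  then have "(vnorm (A *\<^sub>v v))\<^sup>2 \<le> (opnorm A * vnorm v)\<^sup>2"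
    by (rule power_mono) (rule vnorm_nonneg)
  then show ?thesis by (simp add: vnorm_sq power_mult_distrib)
qed

lemma first_order:
  assumes A: "A \<in> carrier_mat n n" and x: "x \<in> carrier_vec n" "vnorm x = 1" "vnorm (A *\<^sub>v x) = opnorm A"
    and w: "w \<in> carrier_vec n" "ip w x = 0"
  shows "ip (A *\<^sub>v w) (A *\<^sub>v x) = 0"
proof (rule ccontr)
  define a where "a = ip (A *\<^sub>v w) (A *\<^sub>v x)"
  define s where "s = opnorm A"
  assume "ip (A *\<^sub>v w) (A *\<^sub>v x) \<noteq> 0"
  then have a0: "a \<noteq> 0" unfolding a_def .
  have nx: "nsq x = 1" using x(2) vnorm_sq[of x] by simp
  have nAx: "nsq (A *\<^sub>v x) = s\<^sup>2" using x(3) vnorm_sq[of "A *\<^sub>v x"] unfolding s_def by simp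
  define P where "P = s\<^sup>2 * nsq w"
  have P0: "P \<ge> 0" unfolding P_def using nsq_nonneg[of w] by simp
  define t where "t = 1 / (P + 1)"
  have t0: "t > 0" unfolding t_def using P0 by simp
  define c where "c = complex_of_real t * cnj a"
  define v where "v = x + c \<cdot>\<^sub>v w"
  have v: "v \<in> carrier_vec n" unfolding v_def using x w by simp
  have ixw: "ip x w = 0" by (rule ip_zero_sym[OF _ w(2)]) (use x(1) w(1) in simp)
  have nv0: "nsq v = nsq x + nsq (c \<cdot>\<^sub>v w) + 2 * Re (ip x (c \<cdot>\<^sub>v w))"
    unfolding v_def by (rule nsq_add) (use x w in simp)
  have "ip x (c \<cdot>\<^sub>v w) = cnj c * ip x w" by (rule ip_smult_right) (use x w in simp)
  then have nv: "nsq v = 1 + (cmod c)\<^sup>2 * nsq w" using nv0 ixw nx by (simp add: nsq_smult)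
  have Av: "A *\<^sub>v v = A *\<^sub>v x + c \<cdot>\<^sub>v (A *\<^sub>v w)"
    unfolding v_def using A x w by (simp add: mult_add_distrib_mat_vec[of _ n n] mv_smult)
  have "ip (A *\<^sub>v x) (c \<cdot>\<^sub>v (A *\<^sub>v w)) = cnj c * cnj a"
    unfolding a_def using A ip_cnj[of "A *\<^sub>v x" "A *\<^sub>v w"] by (subst ip_smult_right) auto
  also have "\<dots> = complex_of_real t * (a * cnj a)" unfolding c_def by simp
  also have "\<dots> = complex_of_real t * complex_of_real ((cmod a)\<^sup>2)" by (simp only: complex_norm_square)
  also have "\<dots> = complex_of_real (t * (cmod a)\<^sup>2)" by (simp only: of_real_mult)
  finally have cr: "ip (A *\<^sub>v x) (c \<cdot>\<^sub>v (A *\<^sub>v w)) = complex_of_real (t * (cmod a)\<^sup>2)" .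
  have nAv: "nsq (A *\<^sub>v v) = s\<^sup>2 + (cmod c)\<^sup>2 * nsq (A *\<^sub>v w) + 2 * (t * (cmod a)\<^sup>2)"
  proof -
    have "nsq (A *\<^sub>v v) = nsq (A *\<^sub>v x) + nsq (c \<cdot>\<^sub>v (A *\<^sub>v w)) + 2 * Re (ip (A *\<^sub>v x) (c \<cdot>\<^sub>v (A *\<^sub>v w)))"
      unfolding Av by (rule nsq_add) (use A in simp)
    then show ?thesis using nAx cr by (simp add: nsq_smult)
  qed
  have le: "nsq (A *\<^sub>v v) \<le> s\<^sup>2 * nsq v" using nsq_le_opnorm[OF A v] unfolding s_def .
  have cc: "(cmod c)\<^sup>2 = t\<^sup>2 * (cmod a)\<^sup>2" unfolding c_def using t0
    by (simp add: norm_mult power_mult_distrib)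
  have "2 * (t * (cmod a)\<^sup>2) \<le> s\<^sup>2 * ((cmod c)\<^sup>2 * nsq w)"
    using le nAv nv nsq_nonneg[of "A *\<^sub>v w"]
    by (simp add: algebra_simps) (smt (verit) mult_nonneg_nonneg zero_le_power2)
  then have "2 * (t * (cmod a)\<^sup>2) \<le> t * (cmod a)\<^sup>2 * (t * P)"
    unfolding cc P_def by (simp add: algebra_simps power2_eq_square)
  moreover have "t * (cmod a)\<^sup>2 > 0" using t0 a0 by simp
  ultimately have "2 \<le> t * P"
    by (metis mult.commute mult_left_le_imp_le)
  moreover have "t * P < 1" unfolding t_def using P0 by (simp add: field_simps)
  ultimately show False by simp
qed


lemma core_ineq:
  fixes S \<delta> t cc kk sb \<rho> a2 N Y X Z :: real
  assumes Ss: "S = sb\<^sup>2" and s0: "sb \<ge> 0" and d0: "\<delta> > 0" and t0: "t > 0" and cc0: "cc > 0"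
    and K0: "kk \<ge> 0" and r0: "\<rho> \<ge> 0" and N1: "N \<le> 1" and ra: "\<rho>\<^sup>2 = N - a2"
    and Y: "Y \<le> S * N - \<delta> * \<rho>\<^sup>2" and X: "X \<le> -2 * t * cc * a2 + 6 * t * sb * kk * \<rho>" and Z: "Z \<le> t\<^sup>2 * kk\<^sup>2"
    and c1: "2 * t * cc \<le> \<delta>/2" and c2: "2 * t * cc \<le> S" and c3: "t * (kk\<^sup>2 + 18 * S * kk\<^sup>2/\<delta>) \<le> cc"
  shows "Y + X + Z \<le> S - t * cc"
proof -
  have amgm: "6 * t * sb * kk * \<rho> \<le> (\<delta>/2) * \<rho>\<^sup>2 + 18 * t\<^sup>2 * S * kk\<^sup>2/\<delta>"
  proof -
    have "0 \<le> (\<delta>/2) * (\<rho> - 6 * t * sb * kk/\<delta>)\<^sup>2" using d0 by simp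
    also have "\<dots> = (\<delta>/2) * \<rho>\<^sup>2 - 6 * t * sb * kk * \<rho> + 18 * t\<^sup>2 * S * kk\<^sup>2/\<delta>"
      using d0 unfolding Ss by (simp add: field_simps power2_eq_square)
    finally show ?thesis by simp
  qed
  have h1: "(2 * t * cc - \<delta>/2) * \<rho>\<^sup>2 \<le> 0" by (rule mult_nonpos_nonneg) (use c1 in auto)
  have h2: "(S - 2 * t * cc) * N \<le> (S - 2 * t * cc) * 1" by (rule mult_left_mono[OF N1]) (use c2 in simp)
  have h3: "t * (t * (kk\<^sup>2 + 18 * S * kk\<^sup>2/\<delta>)) \<le> t * cc" by (rule mult_left_mono[OF c3]) (use t0 in simp)
  have Na: "N = a2 + \<rho>\<^sup>2" using ra by simp
  have eq: "S * N - \<delta> * \<rho>\<^sup>2 + (-2 * t * cc * a2) + ((\<delta>/2) * \<rho>\<^sup>2 + 18 * t\<^sup>2 * S * kk\<^sup>2/\<delta>) + t\<^sup>2 * kk\<^sup>2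
      = (S - 2 * t * cc) * N + (2 * t * cc - \<delta>/2) * \<rho>\<^sup>2 + t * (t * (kk\<^sup>2 + 18 * S * kk\<^sup>2/\<delta>))"
    unfolding Na by (simp add: algebra_simps power2_eq_square add_divide_distrib)
  have "Y + X + Z \<le> S * N - \<delta> * \<rho>\<^sup>2 + (-2 * t * cc * a2) + ((\<delta>/2) * \<rho>\<^sup>2 + 18 * t\<^sup>2 * S * kk\<^sup>2/\<delta>) + t\<^sup>2 * kk\<^sup>2"
    using Y X Z amgm by linarith
  moreover have e1: "(S - 2 * t * cc) * 1 = S - 2 * (t * cc)" by (simp add: algebra_simps)
  ultimately show ?thesis unfolding eq using h1 h2 h3 by linarith
qed


lemma vdecomp: assumes "v \<in> carrier_vec n" "w \<in> carrier_vec n"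
  shows "v = (a::complex) \<cdot>\<^sub>v w + (v + (- a) \<cdot>\<^sub>v w)"
  using assms by (intro eq_vecI) (auto simp: algebra_simps)

lemma nonorth:
  assumes B: "B \<in> carrier_mat n n" and A: "A \<in> carrier_mat n n"
    and w: "w \<in> carrier_vec n" and w1: "nsq w = 1"
    and d0: "\<delta> > 0"
    and bnd: "\<And>v. v \<in> carrier_vec n \<Longrightarrow>
       nsq (B *\<^sub>v v) \<le> nsq (B *\<^sub>v w) * nsq v - \<delta> * (nsq v - (cmod (ip v w))\<^sup>2)"
    and c0: "ip (B *\<^sub>v w) (A *\<^sub>v w) \<noteq> 0"
  shows "\<not> bj_orth B A"
proof
  assume orth: "bj_orth B A"
  define S where "S = nsq (B *\<^sub>v w)"
  define s where "s = vnorm (B *\<^sub>v w)"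
  have Ss: "S = s\<^sup>2" by (simp add: S_def s_def vnorm_sq)
  have s0: "s \<ge> 0" unfolding s_def by (rule vnorm_nonneg)
  define c where "c = ip (B *\<^sub>v w) (A *\<^sub>v w)"
  define cc where "cc = cmod c"
  have cc0: "cc > 0" unfolding cc_def c_def using c0 by simp
  define kk where "kk = opnorm A"
  have kk0: "kk \<ge> 0" unfolding kk_def by (rule opnorm_nonneg[OF A])
  have vw: "vnorm w = 1" using w1 by (simp add: vnorm_nsq)
  have Bw: "B *\<^sub>v w \<in> carrier_vec n" "A *\<^sub>v w \<in> carrier_vec n" using A B w by auto
  have "cc \<le> s * vnorm (A *\<^sub>v w)" unfolding cc_def c_def s_def
    by (rule cs_ineq) (use A B in simp)
  then have "s > 0" using cc0 s0 vnorm_nonneg[of "A *\<^sub>v w"]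
    by (metis less_eq_real_def mult_zero_left not_le)
  then have S0: "S > 0" unfolding Ss by simp
  define M where "M = kk\<^sup>2 + 18 * S * kk\<^sup>2 / \<delta>"
  have M0: "M \<ge> 0" unfolding M_def using S0 d0 by simp
  define t where "t = min (\<delta> / (4 * cc)) (min (S / (2 * cc)) (cc / (M + 1)))"
  have t0: "t > 0" unfolding t_def using d0 cc0 S0 M0 by simp
  have c1: "2 * t * cc \<le> \<delta> / 2"
  proof -
    have "t \<le> \<delta> / (4 * cc)" unfolding t_def by simp
    then have "t * (2 * cc) \<le> \<delta> / (4 * cc) * (2 * cc)" by (rule mult_right_mono) (use cc0 in simp)
    then show ?thesis using cc0 by (simp add: field_simps)
  qed
  have c2: "2 * t * cc \<le> S"
  proof -
    have "t \<le> S / (2 * cc)" unfolding t_def by simp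
    then have "t * (2 * cc) \<le> S / (2 * cc) * (2 * cc)" by (rule mult_right_mono) (use cc0 in simp)
    then show ?thesis using cc0 by (simp add: field_simps)
  qed
  have c3: "t * (kk\<^sup>2 + 18 * S * kk\<^sup>2 / \<delta>) \<le> cc"
  proof -
    have "t \<le> cc / (M + 1)" unfolding t_def by simp
    then have "t * (M + 1) \<le> cc / (M + 1) * (M + 1)" by (rule mult_right_mono) (use M0 in simp)
    then have "t * (M + 1) \<le> cc" using M0 by simp
    then show ?thesis unfolding M_def[symmetric] using t0 by (simp add: algebra_simps)
  qed
  define l where "l = - (complex_of_real t * c / complex_of_real cc)"
  have lc: "cnj l * c = - complex_of_real (t * cc)"
  proof -
    have "cnj l * c = - (complex_of_real t * (c * cnj c) / complex_of_real cc)"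
      unfolding l_def by (simp add: field_simps)
    also have "c * cnj c = complex_of_real (cc\<^sup>2)" unfolding cc_def by (simp only: complex_norm_square)
    finally show ?thesis using cc0 by (simp add: power2_eq_square)
  qed
  have lm: "cmod l = t" unfolding l_def cc_def using t0 cc0 unfolding cc_def
    by (simp add: norm_mult norm_divide)
  have key: "nsq ((B + l \<cdot>\<^sub>m A) *\<^sub>v v) \<le> S - t * cc" if v: "v \<in> carrier_vec n" and v1: "vnorm v \<le> 1" for v
  proof -
    define N where "N = nsq v"
    have N1: "N \<le> 1" using v1 unfolding N_def by (simp add: vnorm_nsq)
    define \<alpha> where "\<alpha> = ip v w"
    define r where "r = v + (- \<alpha>) \<cdot>\<^sub>v w"
    have r: "r \<in> carrier_vec n" unfolding r_def using v w by simp
    have vdec: "v = \<alpha> \<cdot>\<^sub>v w + r" unfolding r_def by (rule vdecomp[OF v w])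
    have iww: "ip w w = 1" using w1 by (simp add: ip_self)
    have irw: "ip r w = 0"
    proof -
      have "ip r w = ip v w + ip ((- \<alpha>) \<cdot>\<^sub>v w) w" unfolding r_def
        by (rule ip_add_left) (use v w in simp)
      also have "\<dots> = 0" unfolding \<alpha>_def by (simp add: ip_smult_left iww)
      finally show ?thesis .
    qed
    have iwr: "ip w r = 0" by (rule ip_zero_sym[OF _ irw]) (use r w in simp)
    have Nr: "N = (cmod \<alpha>)\<^sup>2 + nsq r"
    proof -
      have "nsq v = nsq (\<alpha> \<cdot>\<^sub>v w) + nsq r + 2 * Re (ip (\<alpha> \<cdot>\<^sub>v w) r)"
        by (subst vdec, rule nsq_add) (use r w in simp)
      then show ?thesis unfolding N_def using w1 iwr by (simp add: nsq_smult ip_smult_left)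
    qed
    define \<rho> where "\<rho> = vnorm r"
    have r0: "\<rho> \<ge> 0" unfolding \<rho>_def by (rule vnorm_nonneg)
    have ra: "\<rho>\<^sup>2 = N - (cmod \<alpha>)\<^sup>2" unfolding \<rho>_def using Nr by (simp add: vnorm_sq)
    have r1: "\<rho> \<le> 1"
    proof -
      have "\<rho>\<^sup>2 \<le> 1" using ra N1 zero_le_power2[of "cmod \<alpha>"] by linarith
      then have "\<rho>\<^sup>2 \<le> 1\<^sup>2" by simp
      then show ?thesis by (rule power2_le_imp_le) simp
    qed
    have a1: "cmod \<alpha> \<le> 1"
    proof -
      have "cmod \<alpha> \<le> vnorm v * vnorm w" unfolding \<alpha>_def by (rule cs_ineq) (use v w in simp)
      then show ?thesis using vw v1 by simp
    qed
    have Bv: "B *\<^sub>v v = \<alpha> \<cdot>\<^sub>v (B *\<^sub>v w) + B *\<^sub>v r"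
      by (subst vdec) (use B w r in \<open>simp add: mult_add_distrib_mat_vec[of _ n n] mv_smult\<close>)
    have Av: "A *\<^sub>v v = \<alpha> \<cdot>\<^sub>v (A *\<^sub>v w) + A *\<^sub>v r"
      by (subst vdec) (use A w r in \<open>simp add: mult_add_distrib_mat_vec[of _ n n] mv_smult\<close>)
    have dims: "dim_vec (B *\<^sub>v w) = n" "dim_vec (A *\<^sub>v w) = n" "dim_vec (B *\<^sub>v r) = n" "dim_vec (A *\<^sub>v r) = n"
      using A B by auto
    have nBr: "nsq (B *\<^sub>v r) \<le> S * nsq r"
    proof -
      have "nsq (B *\<^sub>v r) \<le> S * nsq r - \<delta> * nsq r" using bnd[OF r] irw unfolding S_def by simp
      moreover have "\<delta> * nsq r \<ge> 0" using d0 nsq_nonneg[of r] by simp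
      ultimately show ?thesis by linarith
    qed
    have vBr: "vnorm (B *\<^sub>v r) \<le> s * \<rho>"
    proof -
      have "vnorm (B *\<^sub>v r) \<le> sqrt (S * nsq r)" unfolding vnorm_nsq using nBr by simp
      also have "\<dots> = s * \<rho>" unfolding Ss \<rho>_def vnorm_nsq using s0 by (simp add: real_sqrt_mult)
      finally show ?thesis .
    qed
    have vAr: "vnorm (A *\<^sub>v r) \<le> kk * \<rho>" unfolding kk_def \<rho>_def by (rule opnorm_scaled[OF A r])
    have vAw: "vnorm (A *\<^sub>v w) \<le> kk" using opnorm_scaled[OF A w] vw unfolding kk_def by simp
    define E where "E = \<alpha> * ip (B *\<^sub>v w) (A *\<^sub>v r) + cnj \<alpha> * ip (B *\<^sub>v r) (A *\<^sub>v w) + ip (B *\<^sub>v r) (A *\<^sub>v r)"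
    have ipBA: "ip (B *\<^sub>v v) (A *\<^sub>v v) = \<alpha> * cnj \<alpha> * c + E"
      unfolding Bv Av E_def c_def using dims
      by (simp add: ip_add_left ip_add_right ip_smult_left ip_smult_right algebra_simps)
    have E1: "cmod (ip (B *\<^sub>v w) (A *\<^sub>v r)) \<le> s * (kk * \<rho>)"
    proof -
      have "cmod (ip (B *\<^sub>v w) (A *\<^sub>v r)) \<le> vnorm (B *\<^sub>v w) * vnorm (A *\<^sub>v r)"
        by (rule cs_ineq) (use dims in simp)
      also have "\<dots> \<le> s * (kk * \<rho>)" unfolding s_def[symmetric]
        by (rule mult_left_mono[OF vAr s0])
      finally show ?thesis .
    qed
    have E2: "cmod (ip (B *\<^sub>v r) (A *\<^sub>v w)) \<le> (s * \<rho>) * kk"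
    proof -
      have "cmod (ip (B *\<^sub>v r) (A *\<^sub>v w)) \<le> vnorm (B *\<^sub>v r) * vnorm (A *\<^sub>v w)"
        by (rule cs_ineq) (use dims in simp)
      also have "\<dots> \<le> (s * \<rho>) * kk"
        by (rule mult_mono[OF vBr vAw]) (use s0 r0 vnorm_nonneg in auto)
      finally show ?thesis .
    qed
    have E3: "cmod (ip (B *\<^sub>v r) (A *\<^sub>v r)) \<le> (s * \<rho>) * (kk * \<rho>)"
    proof -
      have "cmod (ip (B *\<^sub>v r) (A *\<^sub>v r)) \<le> vnorm (B *\<^sub>v r) * vnorm (A *\<^sub>v r)"
        by (rule cs_ineq) (use dims in simp)
      also have "\<dots> \<le> (s * \<rho>) * (kk * \<rho>)"
        by (rule mult_mono[OF vBr vAr]) (use s0 r0 vnorm_nonneg in auto)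
      finally show ?thesis .
    qed
    have skr: "s * kk * \<rho> \<ge> 0" using s0 kk0 r0 by simp
    have Eb: "cmod E \<le> 3 * (s * kk * \<rho>)"
    proof -
      have "cmod E \<le> cmod \<alpha> * cmod (ip (B *\<^sub>v w) (A *\<^sub>v r)) + cmod \<alpha> * cmod (ip (B *\<^sub>v r) (A *\<^sub>v w))
          + cmod (ip (B *\<^sub>v r) (A *\<^sub>v r))"
        unfolding E_def by (metis (no_types, lifting) complex_mod_cnj norm_mult norm_triangle_le add_mono order_refl)
      also have "\<dots> \<le> 1 * (s * (kk * \<rho>)) + 1 * ((s * \<rho>) * kk) + (s * \<rho>) * (kk * \<rho>)"
        by (intro add_mono mult_mono a1 E1 E2 E3) (use s0 kk0 r0 in auto)
      also have "(s * \<rho>) * (kk * \<rho>) \<le> s * kk * \<rho>"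
        using mult_left_mono[OF r1 skr] by (simp add: algebra_simps)
      finally show ?thesis by (simp add: algebra_simps)
    qed
    have Mv: "(B + l \<cdot>\<^sub>m A) *\<^sub>v v = B *\<^sub>v v + l \<cdot>\<^sub>v (A *\<^sub>v v)" by (rule mv_add_smult[OF B A v])
    have nM: "nsq ((B + l \<cdot>\<^sub>m A) *\<^sub>v v) = nsq (B *\<^sub>v v) + (cmod l)\<^sup>2 * nsq (A *\<^sub>v v)
        + 2 * Re (ip (B *\<^sub>v v) (l \<cdot>\<^sub>v (A *\<^sub>v v)))"
      unfolding Mv by (subst nsq_add) (use A B in \<open>auto simp: nsq_smult\<close>)
    have ipl: "ip (B *\<^sub>v v) (l \<cdot>\<^sub>v (A *\<^sub>v v)) = - complex_of_real (t * cc * (cmod \<alpha>)\<^sup>2) + cnj l * E"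
    proof -
      have "ip (B *\<^sub>v v) (l \<cdot>\<^sub>v (A *\<^sub>v v)) = cnj l * ip (B *\<^sub>v v) (A *\<^sub>v v)"
        by (rule ip_smult_right) (use A B in simp)
      also have "\<dots> = (cnj l * c) * (\<alpha> * cnj \<alpha>) + cnj l * E" unfolding ipBA by (simp add: algebra_simps)
      also have "\<alpha> * cnj \<alpha> = complex_of_real ((cmod \<alpha>)\<^sup>2)" by (simp only: complex_norm_square)
      finally show ?thesis unfolding lc by simp
    qed
    have X: "2 * Re (ip (B *\<^sub>v v) (l \<cdot>\<^sub>v (A *\<^sub>v v))) \<le> -2 * t * cc * (cmod \<alpha>)\<^sup>2 + 6 * t * s * kk * \<rho>"
    proof -
      have "Re (cnj l * E) \<le> cmod (cnj l * E)" by (rule complex_Re_le_cmod)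
      also have "\<dots> = t * cmod E" by (simp add: norm_mult lm)
      also have "\<dots> \<le> t * (3 * (s * kk * \<rho>))" by (rule mult_left_mono[OF Eb]) (use t0 in simp)
      finally have "Re (cnj l * E) \<le> t * (3 * (s * kk * \<rho>))" .
      then show ?thesis unfolding ipl by (simp add: algebra_simps)
    qed
    have Y: "nsq (B *\<^sub>v v) \<le> S * N - \<delta> * \<rho>\<^sup>2"
      using bnd[OF v] unfolding S_def[symmetric] N_def[symmetric] \<alpha>_def[symmetric] ra by simp
    have Z: "(cmod l)\<^sup>2 * nsq (A *\<^sub>v v) \<le> t\<^sup>2 * kk\<^sup>2"
    proof -
      have "nsq (A *\<^sub>v v) \<le> kk\<^sup>2 * N" using nsq_le_opnorm[OF A v] unfolding kk_def N_def .
      also have "\<dots> \<le> kk\<^sup>2 * 1" by (rule mult_left_mono[OF N1]) simp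
      finally have "nsq (A *\<^sub>v v) \<le> kk\<^sup>2" by simp
      then show ?thesis unfolding lm by (simp add: mult_left_mono)
    qed
    show ?thesis unfolding nM
      using core_ineq[OF Ss s0 d0 t0 cc0 kk0 r0 N1 ra Y X Z c1 c2 c3] by linarith
  qed
  have "opnorm (B + l \<cdot>\<^sub>m A) \<le> sqrt (S - t * cc)"
  proof (rule opnorm_le[of _ n])
    show "B + l \<cdot>\<^sub>m A \<in> carrier_mat n n" using A B by simp
    fix v assume "v \<in> carrier_vec n" "vnorm v \<le> 1"
    then have "nsq ((B + l \<cdot>\<^sub>m A) *\<^sub>v v) \<le> S - t * cc" by (rule key)
    then show "vnorm ((B + l \<cdot>\<^sub>m A) *\<^sub>v v) \<le> sqrt (S - t * cc)"
      unfolding vnorm_nsq by simp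
  qed
  also have "\<dots> < sqrt S" using t0 cc0 by simp
  also have "sqrt S = vnorm (B *\<^sub>v w)" unfolding S_def vnorm_nsq ..
  also have "\<dots> \<le> opnorm B" by (rule opnorm_ge[OF B w]) (simp add: vw)
  finally have "opnorm (B + l \<cdot>\<^sub>m A) < opnorm B" .
  moreover have "opnorm B \<le> opnorm (B + l \<cdot>\<^sub>m A)" using orth unfolding bj_orth_def by blast
  ultimately show False by simp
qed


lemma rank_one:
  fixes A :: "complex mat"
  assumes A: "A \<in> carrier_mat n n" and nz: "A $$ (i0, j0) \<noteq> 0" "i0 < n" "j0 < n"
    and prod: "\<And>i j. i < n \<Longrightarrow> j < n \<Longrightarrow> A $$ (i,j) = f i * g j"
  shows "vec_space.rank n A = 1"
proof -
  have le: "vec_space.rank n A \<le> 1"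
    by (rule vec_space.rank_le_1_product_entries[OF A, of f g]) (use A prod in auto)
  have sub: "submatrix A {i0} {j0} \<in> carrier_mat 1 1"
    using A nz unfolding submatrix_def by (simp add: Collect_conv_if)
  have L: "(LEAST a::nat. a = k) = k" for k by (rule Least_equality) auto
  have "submatrix A {i0} {j0} $$ (0,0) = A $$ (i0, j0)"
    using A nz unfolding submatrix_def by (simp add: Collect_conv_if L)
  then have "det (submatrix A {i0} {j0}) \<noteq> 0" using det_single[OF sub] nz by simp
  then have "card {j. j < n \<and> j \<in> {j0}} \<le> vec_space.rank n A"
    by (rule vec_space.rank_gt_minor[OF A])
  moreover have "card {j. j < n \<and> j \<in> {j0}} = 1" using nz by (simp add: Collect_conv_if)
  ultimately show ?thesis using le by simp
qed


definition outer :: "complex Matrix.vec \<Rightarrow> complex Matrix.vec \<Rightarrow> complex mat" where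
  "outer z w = Matrix.mat (dim_vec z) (dim_vec w) (\<lambda>(i,j). z $ i * cnj (w $ j))"

lemma outer_carrier[simp]: "z \<in> carrier_vec n \<Longrightarrow> w \<in> carrier_vec n \<Longrightarrow> outer z w \<in> carrier_mat n n"
  unfolding outer_def by simp

lemma outer_index: "z \<in> carrier_vec n \<Longrightarrow> w \<in> carrier_vec n \<Longrightarrow> i < n \<Longrightarrow> j < n \<Longrightarrow>
  outer z w $$ (i,j) = z $ i * cnj (w $ j)"
  unfolding outer_def by simp

lemma outer_mv: assumes z: "z \<in> carrier_vec n" and w: "w \<in> carrier_vec n" and v: "v \<in> carrier_vec n"
  shows "outer z w *\<^sub>v v = ip v w \<cdot>\<^sub>v z"
proof (rule eq_vecI)
  show "dim_vec (outer z w *\<^sub>v v) = dim_vec (ip v w \<cdot>\<^sub>v z)" using z w by (simp add: outer_def)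
  fix i assume "i < dim_vec (ip v w \<cdot>\<^sub>v z)"
  then have i: "i < n" using z by simp
  have "(outer z w *\<^sub>v v) $ i = (\<Sum>j<n. outer z w $$ (i,j) * v $ j)"
    by (rule mv_index[OF outer_carrier[OF z w] v i])
  also have "\<dots> = (\<Sum>j<n. z $ i * (v $ j * cnj (w $ j)))"
    using z w i by (intro sum.cong) (auto simp: outer_index)
  also have "\<dots> = z $ i * ip v w" using v unfolding ip_def by (simp add: sum_distrib_left)
  finally show "(outer z w *\<^sub>v v) $ i = (ip v w \<cdot>\<^sub>v z) $ i" using i z by simp
qed

definition nrm :: "complex Matrix.vec \<Rightarrow> complex Matrix.vec" where
  "nrm v = complex_of_real (1 / vnorm v) \<cdot>\<^sub>v v"

lemma vnorm_pos: assumes "v \<noteq> 0\<^sub>v (dim_vec v)" shows "vnorm v > 0"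
proof -
  have "nsq v \<noteq> 0" using assms nsq_zero_iff by simp
  then have "nsq v > 0" using nsq_nonneg[of v] by simp
  then show ?thesis by (simp add: vnorm_nsq)
qed

lemma nrm_carrier[simp]: "v \<in> carrier_vec n \<Longrightarrow> nrm v \<in> carrier_vec n"
  unfolding nrm_def by simp

lemma nsq_nrm: assumes "v \<noteq> 0\<^sub>v (dim_vec v)" shows "nsq (nrm v) = 1"
proof -
  have p: "vnorm v > 0" by (rule vnorm_pos[OF assms])
  have "nsq (nrm v) = (1 / vnorm v)\<^sup>2 * (vnorm v)\<^sup>2" unfolding nrm_def nsq_smult vnorm_sq
    using p by (simp add: norm_divide)
  then show ?thesis using p by (simp add: power_divide norm_divide)
qed

lemma nsq_one_vnorm: "nsq v = 1 \<Longrightarrow> vnorm v = 1"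
  by (simp add: vnorm_nsq)

lemma ip_self_one: "nsq v = 1 \<Longrightarrow> ip v v = 1"
  by (simp add: ip_self)

lemma test1:
  assumes ls: "left_symmetric V A" and VC: "V \<subseteq> carrier_mat n n"
    and x: "x \<in> carrier_vec n" "vnorm x \<le> 1" "vnorm (A *\<^sub>v x) = opnorm A"
    and w: "w \<in> carrier_vec n" "nsq w = 1" "ip x w = 0"
    and z: "z \<in> carrier_vec n" and BV: "outer z w \<in> V"
  shows "ip z (A *\<^sub>v w) = 0"
proof (rule ccontr)
  assume c0: "ip z (A *\<^sub>v w) \<noteq> 0"
  define B where "B = outer z w"
  have AV: "A \<in> V" using ls unfolding left_symmetric_def by simp
  have A: "A \<in> carrier_mat n n" using AV VC by auto
  have B: "B \<in> carrier_mat n n" unfolding B_def using z w(1) by simp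
  have Bx: "B *\<^sub>v x = 0 \<cdot>\<^sub>v z" unfolding B_def outer_mv[OF z w(1) x(1)] w(3) ..
  have "ip (A *\<^sub>v x) (B *\<^sub>v x) = 0" unfolding Bx by (subst ip_smult_right) (use A z in simp_all)
  then have "bj_orth A B" by (rule orth_by_max[OF A B x])
  then have orth: "bj_orth B A" using ls BV unfolding left_symmetric_def B_def by blast
  have iww: "ip w w = 1" using w(2) by (rule ip_self_one)
  have Bw: "B *\<^sub>v w = z" unfolding B_def outer_mv[OF z w(1) w(1)] iww by simp
  have zn: "nsq z > 0"
  proof (rule ccontr)
    assume "\<not> nsq z > 0"
    then have "nsq z = 0" using nsq_nonneg[of z] by simp
    then have "z = 0\<^sub>v n" using nsq_zero_iff[of z] z by simp
    then have "ip z (A *\<^sub>v w) = 0" unfolding ip_def by simp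
    then show False using c0 by simp
  qed
  have "\<not> bj_orth B A"
  proof (rule nonorth[OF B A w(1) w(2) zn])
    fix v :: "complex Matrix.vec" assume v: "v \<in> carrier_vec n"
    have "nsq (B *\<^sub>v v) = (cmod (ip v w))\<^sup>2 * nsq z" unfolding B_def outer_mv[OF z w(1) v] nsq_smult ..
    then show "nsq (B *\<^sub>v v) \<le> nsq (B *\<^sub>v w) * nsq v - nsq z * (nsq v - (cmod (ip v w))\<^sup>2)"
      unfolding Bw by (simp add: algebra_simps)
  next
    show "ip (B *\<^sub>v w) (A *\<^sub>v w) \<noteq> 0" unfolding Bw by (rule c0)
  qed
  then show False using orth by simp
qed

lemma decomp2: assumes "v \<in> carrier_vec n" "x \<in> carrier_vec n" "m \<in> carrier_vec n"
  shows "v = ((a::complex) \<cdot>\<^sub>v x + b \<cdot>\<^sub>v m) + (v + (- a) \<cdot>\<^sub>v x + (- b) \<cdot>\<^sub>v m)"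
  using assms by (intro eq_vecI) (auto simp: algebra_simps)

lemma bessel2:
  assumes v: "v \<in> carrier_vec n" and x: "x \<in> carrier_vec n" "nsq x = 1"
    and m: "m \<in> carrier_vec n" "nsq m = 1" and xm: "ip x m = 0"
  shows "(cmod (ip v x))\<^sup>2 + (cmod (ip v m))\<^sup>2 \<le> nsq v"
proof -
  define a where "a = ip v x"
  define b where "b = ip v m"
  define r where "r = v + (- a) \<cdot>\<^sub>v x + (- b) \<cdot>\<^sub>v m"
  define u where "u = a \<cdot>\<^sub>v x + b \<cdot>\<^sub>v m"
  have r: "r \<in> carrier_vec n" unfolding r_def using v x m by simp
  have u: "u \<in> carrier_vec n" unfolding u_def using x m by simp
  have dec: "v = u + r" unfolding u_def r_def by (rule decomp2[OF v x(1) m(1)])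
  have ixx: "ip x x = 1" "ip m m = 1" using x m by (simp_all add: ip_self_one)
  have mx: "ip m x = 0" by (rule ip_zero_sym[OF _ xm]) (use x m in simp)
  have dims: "dim_vec v = n" "dim_vec x = n" "dim_vec m = n" "dim_vec r = n" "dim_vec u = n"
    using v x m r u by auto
  have rx: "ip r x = 0" unfolding r_def a_def using dims ixx mx
    by (simp add: ip_add_left ip_smult_left)
  have rm: "ip r m = 0" unfolding r_def b_def using dims ixx xm
    by (simp add: ip_add_left ip_smult_left)
  have ur: "ip u r = 0"
  proof -
    have "ip x r = 0" by (rule ip_zero_sym[OF _ rx]) (use dims in simp)
    moreover have "ip m r = 0" by (rule ip_zero_sym[OF _ rm]) (use dims in simp)
    ultimately show ?thesis unfolding u_def using dims by (simp add: ip_add_left ip_smult_left)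
  qed
  have nu: "nsq u = (cmod a)\<^sup>2 + (cmod b)\<^sup>2"
  proof -
    have "nsq u = nsq (a \<cdot>\<^sub>v x) + nsq (b \<cdot>\<^sub>v m) + 2 * Re (ip (a \<cdot>\<^sub>v x) (b \<cdot>\<^sub>v m))"
      unfolding u_def by (rule nsq_add) (use dims in simp)
    also have "ip (a \<cdot>\<^sub>v x) (b \<cdot>\<^sub>v m) = 0" using dims xm by (simp add: ip_smult_left ip_smult_right)
    finally show ?thesis using x m by (simp add: nsq_smult)
  qed
  have "nsq v = nsq u + nsq r + 2 * Re (ip u r)" unfolding dec by (rule nsq_add) (use dims in simp)
  then have "nsq v = (cmod a)\<^sup>2 + (cmod b)\<^sup>2 + nsq r" using ur nu by simp
  then show ?thesis unfolding a_def b_def using nsq_nonneg[of r] by simp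
qed

lemma nsq_orth2:
  assumes z1: "z1 \<in> carrier_vec n" "nsq z1 = 1" and z2: "z2 \<in> carrier_vec n" "nsq z2 = 1"
    and o: "ip z1 z2 = 0"
  shows "nsq (a \<cdot>\<^sub>v z1 + b \<cdot>\<^sub>v z2) = (cmod a)\<^sup>2 + (cmod b)\<^sup>2"
proof -
  have "nsq (a \<cdot>\<^sub>v z1 + b \<cdot>\<^sub>v z2) = nsq (a \<cdot>\<^sub>v z1) + nsq (b \<cdot>\<^sub>v z2) + 2 * Re (ip (a \<cdot>\<^sub>v z1) (b \<cdot>\<^sub>v z2))"
    by (rule nsq_add) (use z1 z2 in simp)
  also have "ip (a \<cdot>\<^sub>v z1) (b \<cdot>\<^sub>v z2) = 0" using z1 z2 o by (simp add: ip_smult_left ip_smult_right)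
  finally show ?thesis using z1 z2 by (simp add: nsq_smult)
qed

lemma quad_identity:
  fixes a b :: complex
  shows "(cmod (5 * b))\<^sup>2 + (cmod (4 * a + 3 * b))\<^sup>2 = 10 * ((cmod a)\<^sup>2 + (cmod b)\<^sup>2) + 6 * (cmod (a + 2 * b))\<^sup>2"
  unfolding cmod_power2 by (simp add: power2_eq_square algebra_simps)


lemma ip_comb_left: assumes "z1 \<in> carrier_vec n" "z2 \<in> carrier_vec n" "y \<in> carrier_vec n"
  shows "ip (a \<cdot>\<^sub>v z1 + b \<cdot>\<^sub>v z2) y = a * ip z1 y + b * ip z2 y"
  using assms by (simp add: ip_add_left ip_smult_left)

lemma ip_comb_right: assumes "z1 \<in> carrier_vec n" "z2 \<in> carrier_vec n" "y \<in> carrier_vec n"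
  shows "ip y (a \<cdot>\<^sub>v z1 + b \<cdot>\<^sub>v z2) = cnj a * ip y z1 + cnj b * ip y z2"
  using assms by (simp add: ip_add_right ip_smult_right)

lemma mv_comb: assumes "(A::complex mat) \<in> carrier_mat n n" "z1 \<in> carrier_vec n" "z2 \<in> carrier_vec n"
  shows "A *\<^sub>v (a \<cdot>\<^sub>v z1 + b \<cdot>\<^sub>v z2) = a \<cdot>\<^sub>v (A *\<^sub>v z1) + b \<cdot>\<^sub>v (A *\<^sub>v z2)"
  using assms by (simp add: mult_add_distrib_mat_vec[of _ n n] mv_smult)

lemma test2:
  assumes ls: "left_symmetric V A" and VC: "V \<subseteq> carrier_mat n n"
    and x: "x \<in> carrier_vec n" "nsq x = 1" "vnorm (A *\<^sub>v x) = opnorm A"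
    and m: "m \<in> carrier_vec n" "nsq m = 1" "ip m x = 0" "A *\<^sub>v m = 0\<^sub>v n"
    and z1: "z1 \<in> carrier_vec n" "nsq z1 = 1" and z2: "z2 \<in> carrier_vec n" "nsq z2 = 1"
    and o: "ip z1 z2 = 0" and y2: "ip z2 (A *\<^sub>v x) = 0" and y1: "ip z1 (A *\<^sub>v x) \<noteq> 0"
    and BV: "outer (5 \<cdot>\<^sub>v z1) m + outer z2 (4 \<cdot>\<^sub>v x + 3 \<cdot>\<^sub>v m) \<in> V"
  shows False
proof -
  have AV: "A \<in> V" using ls unfolding left_symmetric_def by simp
  have A: "A \<in> carrier_mat n n" using AV VC by auto
  define u where "u = 4 \<cdot>\<^sub>v x + 3 \<cdot>\<^sub>v m"
  have u: "u \<in> carrier_vec n" unfolding u_def using x m by simp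
  define B where "B = outer (5 \<cdot>\<^sub>v z1) m + outer z2 u"
  have B: "B \<in> carrier_mat n n" unfolding B_def using z1 z2 m u by simp
  have xm: "ip x m = 0" by (rule ip_zero_sym[OF _ m(3)]) (use x m in simp)
  have ixx: "ip x x = 1" "ip m m = 1" using x m by (simp_all add: ip_self_one)
  have Ax: "A *\<^sub>v x \<in> carrier_vec n" using A x by simp
  have ipu: "ip v u = 4 * ip v x + 3 * ip v m" if v: "v \<in> carrier_vec n" for v
    unfolding u_def using ip_comb_right[OF x(1) m(1) v, of 4 3] by simp
  have Bv: "B *\<^sub>v v = (5 * ip v m) \<cdot>\<^sub>v z1 + (4 * ip v x + 3 * ip v m) \<cdot>\<^sub>v z2"
    if v: "v \<in> carrier_vec n" for v
  proof -
    have h0: "B *\<^sub>v v = outer (5 \<cdot>\<^sub>v z1) m *\<^sub>v v + outer z2 u *\<^sub>v v"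
      unfolding B_def by (rule add_mult_distrib_mat_vec[of _ n n]) (use z1 z2 m u v in simp_all)
    have e1: "outer (5 \<cdot>\<^sub>v z1) m *\<^sub>v v = ip v m \<cdot>\<^sub>v (5 \<cdot>\<^sub>v z1)"
      by (rule outer_mv) (use z1 m v in simp_all)
    have e2: "outer z2 u *\<^sub>v v = ip v u \<cdot>\<^sub>v z2"
      by (rule outer_mv[OF z2(1) u v])
    show ?thesis unfolding h0 e1 e2 ipu[OF v] using z1 z2 by (intro eq_vecI) (auto simp: algebra_simps)
  qed
  have "ip (A *\<^sub>v x) (B *\<^sub>v x) = 0"
  proof -
    have yz2: "ip (A *\<^sub>v x) z2 = 0" by (rule ip_zero_sym[OF _ y2]) (use A z2 in simp)
    show ?thesis unfolding Bv[OF x(1)] ip_comb_right[OF z1(1) z2(1) Ax] xm yz2 by simp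
  qed
  moreover have vx: "vnorm x \<le> 1" using nsq_one_vnorm[OF x(2)] by simp
  ultimately have "bj_orth A B" using orth_by_max[OF A B x(1) _ x(3)] by blast
  then have orth: "bj_orth B A" using ls BV unfolding left_symmetric_def B_def u_def by blast
  define s5 where "s5 = complex_of_real (sqrt 5)"
  have s5c: "cnj s5 = s5" unfolding s5_def by simp
  have s5sq: "s5 * s5 = 5"
  proof -
    have "s5 * s5 = complex_of_real (sqrt 5 * sqrt 5)" unfolding s5_def by (simp only: of_real_mult)
    then show ?thesis by simp
  qed
  have s50: "s5 \<noteq> 0" unfolding s5_def by simp
  have cs5: "(cmod (1 / s5))\<^sup>2 = 1 / 5" unfolding s5_def by (simp add: norm_divide power_divide)
  define w where "w = (1 / s5) \<cdot>\<^sub>v (1 \<cdot>\<^sub>v x + 2 \<cdot>\<^sub>v m)"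
  have w: "w \<in> carrier_vec n" unfolding w_def using x m by simp
  have nw: "nsq w = 1"
  proof -
    have "nsq (1 \<cdot>\<^sub>v x + 2 \<cdot>\<^sub>v m) = 5" using nsq_orth2[OF x(1) x(2) m(1) m(2) xm, of 1 2] by simp
    then show ?thesis unfolding w_def nsq_smult cs5 by simp
  qed
  have wx: "ip w x = 1 / s5" unfolding w_def ip_smult_left ip_comb_left[OF x(1) m(1) x(1)]
    using ixx m(3) by simp
  have wm: "ip w m = 2 / s5" unfolding w_def ip_smult_left ip_comb_left[OF x(1) m(1) m(1)]
    using ixx xm by simp
  have Bw: "B *\<^sub>v w = (10 / s5) \<cdot>\<^sub>v z1 + (10 / s5) \<cdot>\<^sub>v z2"
    unfolding Bv[OF w] wx wm by (simp add: field_simps)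
  have nBw: "nsq (B *\<^sub>v w) = 40"
  proof -
    have "nsq (B *\<^sub>v w) = 2 * (cmod (10 / s5))\<^sup>2" unfolding Bw nsq_orth2[OF z1 z2 o] by simp
    also have "(cmod (10 / s5))\<^sup>2 = 100 * (cmod (1 / s5))\<^sup>2" by (simp add: norm_divide power_divide)
    finally show ?thesis unfolding cs5 by simp
  qed
  have Aw: "A *\<^sub>v w = (1 / s5) \<cdot>\<^sub>v (A *\<^sub>v x)"
  proof -
    have "A *\<^sub>v w = (1 / s5) \<cdot>\<^sub>v (A *\<^sub>v (1 \<cdot>\<^sub>v x + 2 \<cdot>\<^sub>v m))" unfolding w_def
      by (rule mv_smult[OF A]) (use x m in simp)
    also have "A *\<^sub>v (1 \<cdot>\<^sub>v x + 2 \<cdot>\<^sub>v m) = A *\<^sub>v x"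
      unfolding mv_comb[OF A x(1) m(1)] m(4) using A by (intro eq_vecI) auto
    finally show ?thesis .
  qed
  have c0: "ip (B *\<^sub>v w) (A *\<^sub>v w) \<noteq> 0"
  proof -
    have "ip (B *\<^sub>v w) (A *\<^sub>v w) = (10 / s5) * ip z1 (A *\<^sub>v w) + (10 / s5) * ip z2 (A *\<^sub>v w)"
      unfolding Bw by (rule ip_comb_left[OF z1(1) z2(1)]) (use A w in simp)
    also have "ip z1 (A *\<^sub>v w) = cnj (1 / s5) * ip z1 (A *\<^sub>v x)"
      unfolding Aw by (rule ip_smult_right) (use z1 A in simp)
    also have "ip z2 (A *\<^sub>v w) = cnj (1 / s5) * ip z2 (A *\<^sub>v x)"
      unfolding Aw by (rule ip_smult_right) (use z2 A in simp)
    finally have eq: "ip (B *\<^sub>v w) (A *\<^sub>v w) = (10 / s5) * (cnj (1 / s5) * ip z1 (A *\<^sub>v x))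
        + (10 / s5) * (cnj (1 / s5) * ip z2 (A *\<^sub>v x))" .
    have s5c': "cnj (1 / s5) = 1 / s5" using s5c by simp
    have "ip (B *\<^sub>v w) (A *\<^sub>v w) = 10 / (s5 * s5) * ip z1 (A *\<^sub>v x)"
      unfolding eq s5c' y2 by simp
    then have "ip (B *\<^sub>v w) (A *\<^sub>v w) = 2 * ip z1 (A *\<^sub>v x)" unfolding s5sq by simp
    then show ?thesis using y1 by simp
  qed
  have "\<not> bj_orth B A"
  proof (rule nonorth[OF B A w nw, of 30])
    show "(0::real) < 30" by simp
    show "ip (B *\<^sub>v w) (A *\<^sub>v w) \<noteq> 0" by (rule c0)
    fix v :: "complex Matrix.vec" assume v: "v \<in> carrier_vec n"
    define a where "a = ip v x"
    define b where "b = ip v m"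
    have nBv: "nsq (B *\<^sub>v v) = (cmod (5 * b))\<^sup>2 + (cmod (4 * a + 3 * b))\<^sup>2"
      unfolding Bv[OF v] nsq_orth2[OF z1 z2 o] a_def b_def ..
    have vw: "ip v w = (1 / s5) * (a + 2 * b)"
    proof -
      have "ip v w = cnj (1 / s5) * ip v (1 \<cdot>\<^sub>v x + 2 \<cdot>\<^sub>v m)" unfolding w_def
        by (rule ip_smult_right) (use v x m in simp)
      also have "ip v (1 \<cdot>\<^sub>v x + 2 \<cdot>\<^sub>v m) = a + 2 * b"
        unfolding ip_comb_right[OF x(1) m(1) v] a_def b_def by simp
      finally show ?thesis using s5c by simp
    qed
    have cvw: "(cmod (ip v w))\<^sup>2 = (cmod (a + 2 * b))\<^sup>2 / 5"
      unfolding vw norm_mult power_mult_distrib cs5 by simp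
    have bes: "(cmod a)\<^sup>2 + (cmod b)\<^sup>2 \<le> nsq v" unfolding a_def b_def
      by (rule bessel2[OF v x(1) x(2) m(1) m(2) xm])
    show "nsq (B *\<^sub>v v) \<le> nsq (B *\<^sub>v w) * nsq v - 30 * (nsq v - (cmod (ip v w))\<^sup>2)"
      unfolding nBv nBw cvw quad_identity using bes by simp
  qed
  then show False using orth by simp
qed


lemma Vp_iff: assumes "1 \<le> p"
  shows "M \<in> Vp n p \<longleftrightarrow> M \<in> carrier_mat n n \<and> (\<forall>j<n. p - 1 \<le> j \<longrightarrow> M $$ (0,j) = 0)"
proof -
  have "(\<forall>k. p \<le> k \<and> k \<le> n \<longrightarrow> M $$ (0, k - 1) = 0) \<longleftrightarrow> (\<forall>j<n. p - 1 \<le> j \<longrightarrow> M $$ (0,j) = 0)"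
  proof
    assume h: "\<forall>k. p \<le> k \<and> k \<le> n \<longrightarrow> M $$ (0, k - 1) = 0"
    show "\<forall>j<n. p - 1 \<le> j \<longrightarrow> M $$ (0,j) = 0"
    proof (intro allI impI)
      fix j assume "j < n" "p - 1 \<le> j"
      then show "M $$ (0,j) = 0" using h[rule_format, of "j+1"] assms by simp
    qed
  next
    assume h: "\<forall>j<n. p - 1 \<le> j \<longrightarrow> M $$ (0,j) = 0"
    show "\<forall>k. p \<le> k \<and> k \<le> n \<longrightarrow> M $$ (0, k - 1) = 0"
    proof (intro allI impI)
      fix k assume kk: "p \<le> k \<and> k \<le> n"
      have "k - 1 < n" "p - 1 \<le> k - 1" using kk assms by arith+
      then show "M $$ (0, k - 1) = 0" using h by blast
    qed
  qed
  then show ?thesis unfolding Vp_def by simp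
qed

lemma Vp_carrier: "Vp n p \<subseteq> carrier_mat n n"
  unfolding Vp_def by auto

definition ov :: "complex Matrix.vec \<Rightarrow> nat \<Rightarrow> nat \<Rightarrow> nat \<Rightarrow> complex Matrix.vec" where
  "ov y n k j = Matrix.vec n (\<lambda>i. if i = k then cnj (y $ j) else if i = j then - cnj (y $ k) else 0)"

lemma ov_props:
  fixes y :: "complex Matrix.vec"
  assumes y: "y \<in> carrier_vec n" and kj: "k < n" "j < n" "k \<noteq> j" and yk: "y $ k \<noteq> 0"
  shows "ov y n k j \<in> carrier_vec n" "ov y n k j \<noteq> 0\<^sub>v n" "ip (ov y n k j) y = 0"
    "\<And>i. i < n \<Longrightarrow> i \<noteq> k \<Longrightarrow> i \<noteq> j \<Longrightarrow> ov y n k j $ i = 0"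
    "ov y n k j $ k = cnj (y $ j)" "ov y n k j $ j = - cnj (y $ k)"
proof -
  show c: "ov y n k j \<in> carrier_vec n" unfolding ov_def by simp
  show "ov y n k j $ k = cnj (y $ j)" "ov y n k j $ j = - cnj (y $ k)"
    unfolding ov_def using kj by auto
  show "\<And>i. i < n \<Longrightarrow> i \<noteq> k \<Longrightarrow> i \<noteq> j \<Longrightarrow> ov y n k j $ i = 0" unfolding ov_def by auto
  have "ov y n k j $ j \<noteq> 0" unfolding ov_def using kj yk by auto
  then show "ov y n k j \<noteq> 0\<^sub>v n" using kj by auto
  have "ip (ov y n k j) y = (\<Sum>i<n. (if i = k then cnj (y $ j) * cnj (y $ k) else 0)
      + (if i = j then - cnj (y $ k) * cnj (y $ j) else 0))"
    unfolding ip_def ov_def using kj by (intro sum.cong) auto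
  also have "\<dots> = 0" using kj by (simp add: sum.distrib)
  finally show "ip (ov y n k j) y = 0" .
qed

lemma nrm_index: "i < dim_vec (v::complex Matrix.vec) \<Longrightarrow> nrm v $ i = complex_of_real (1 / vnorm v) * v $ i"
  unfolding nrm_def by simp

lemma ip_nrm_left: "ip (nrm v) w = complex_of_real (1 / vnorm v) * ip v w"
  unfolding nrm_def by (rule ip_smult_left)

lemma ip_nrm_right: "dim_vec w = dim_vec v \<Longrightarrow> ip w (nrm v) = complex_of_real (1 / vnorm v) * ip w v"
  unfolding nrm_def by (subst ip_smult_right) auto

lemma mv_unit: assumes "(A::complex mat) \<in> carrier_mat n n" "i < n" "j < n"
  shows "(A *\<^sub>v unit_vec n j) $ i = A $$ (i,j)"
proof -
  have "(A *\<^sub>v unit_vec n j) $ i = (\<Sum>k<n. A $$ (i,k) * unit_vec n j $ k)"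
    by (rule mv_index) (use assms in auto)
  also have "\<dots> = (\<Sum>k<n. if k = j then A $$ (i,j) else 0)"
    using assms by (intro sum.cong) auto
  also have "\<dots> = A $$ (i,j)" using assms by simp
  finally show ?thesis .
qed

lemma nsq_unit: "j < n \<Longrightarrow> nsq (unit_vec n j) = 1"
proof -
  assume j: "j < n"
  have "nsq (unit_vec n j) = (\<Sum>i<n. if i = j then 1 else 0)"
    unfolding nsq_def using j by (intro sum.cong) auto
  then show ?thesis using j by simp
qed

lemma entry_le_nsq: "i < dim_vec (v::complex Matrix.vec) \<Longrightarrow> (cmod (v $ i))\<^sup>2 \<le> nsq v"
  unfolding nsq_def by (rule member_le_sum) auto

lemma opnorm_pos: assumes A: "A \<in> carrier_mat n n" and nz: "A \<noteq> 0\<^sub>m n n"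
  shows "opnorm A > 0"
proof -
  obtain i j where ij: "i < n" "j < n" "A $$ (i,j) \<noteq> 0"
    using nz A by (metis carrier_matD(1) carrier_matD(2) eq_matI index_zero_mat(1,2,3))
  have "(cmod (A $$ (i,j)))\<^sup>2 \<le> nsq (A *\<^sub>v unit_vec n j)"
    using entry_le_nsq[of i "A *\<^sub>v unit_vec n j"] mv_unit[OF A ij(1,2)] A ij by simp
  then have "nsq (A *\<^sub>v unit_vec n j) > 0" using ij(3)
    by (smt (verit) zero_less_power2 norm_eq_zero)
  then have "vnorm (A *\<^sub>v unit_vec n j) > 0" by (simp add: vnorm_nsq)
  moreover have "vnorm (A *\<^sub>v unit_vec n j) \<le> opnorm A"
    by (rule opnorm_ge[OF A]) (use ij nsq_unit[of j n] in \<open>auto simp: vnorm_nsq\<close>)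
  ultimately show ?thesis by simp
qed


lemma ip_unit0: assumes "v \<in> carrier_vec n" "0 < n"
  shows "ip (unit_vec n 0) v = cnj (v $ 0)"
proof -
  have "ip (unit_vec n 0) v = (\<Sum>i<n. if i = 0 then cnj (v $ 0) else 0)"
    unfolding ip_def using assms by (intro sum.cong) auto
  then show ?thesis using assms by simp
qed

lemma structure_lemma:
  fixes A :: "complex mat"
  assumes p: "2 \<le> p" "p \<le> n" and ls: "left_symmetric (Vp n p) A" and nz: "A \<noteq> 0\<^sub>m n n"
  shows "\<exists>x y. x \<in> carrier_vec n \<and> y \<in> carrier_vec n \<and> nsq x = 1 \<and> A *\<^sub>v x = y \<and>
     vnorm y = opnorm A \<and> opnorm A > 0 \<and> (\<forall>v\<in>carrier_vec n. A *\<^sub>v v = ip v x \<cdot>\<^sub>v y)"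
proof -
  define V where "V = Vp n p"
  have VC: "V \<subseteq> carrier_mat n n" unfolding V_def by (rule Vp_carrier)
  have ls': "left_symmetric V A" using ls unfolding V_def .
  have AV: "A \<in> V" using ls' unfolding left_symmetric_def by simp
  have A: "A \<in> carrier_mat n n" using AV VC by auto
  have n0: "0 < n" using p by simp
  have p1: "1 \<le> p" using p by simp
  have pos: "opnorm A > 0" by (rule opnorm_pos[OF A nz])
  obtain x where x: "x \<in> carrier_vec n" "vnorm x = 1" "vnorm (A *\<^sub>v x) = opnorm A"
    using exists_unit_max[OF A pos] by blast
  have nx: "nsq x = 1" using x(2) vnorm_sq[of x] by simp
  have vx: "vnorm x \<le> 1" using x(2) by simp
  define y where "y = A *\<^sub>v x"
  have y: "y \<in> carrier_vec n" unfolding y_def using A x by simp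
  have AVi: "\<And>j. j < n \<Longrightarrow> p - 1 \<le> j \<Longrightarrow> A $$ (0,j) = 0" using AV unfolding V_def Vp_iff[OF p1] by auto
  have F1: "(A *\<^sub>v w) $ i = 0" if w: "w \<in> carrier_vec n" "ip w x = 0" and i: "1 \<le> i" "i < n" for w i
  proof (cases "w = 0\<^sub>v n")
    case True
    then show ?thesis using A i by (simp add: mv_index[OF A _ i(2)])
  next
    case False
    then have wnz: "w \<noteq> 0\<^sub>v (dim_vec w)" using w by simp
    define w' where "w' = nrm w"
    have w': "w' \<in> carrier_vec n" unfolding w'_def using w by simp
    have nw': "nsq w' = 1" unfolding w'_def by (rule nsq_nrm[OF wnz])
    have ixw: "ip x w = 0" by (rule ip_zero_sym[OF _ w(2)]) (use x w in simp)
    have ixw': "ip x w' = 0" unfolding w'_def using ip_nrm_right[of x w] x w ixw by simp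
    define z where "z = Matrix.vec n (\<lambda>i. if i = 0 then 0 else (A *\<^sub>v w') $ i)"
    have z: "z \<in> carrier_vec n" unfolding z_def by simp
    have BV: "outer z w' \<in> V" unfolding V_def Vp_iff[OF p1]
      using z w' n0 by (auto simp: outer_index z_def)
    have "ip z (A *\<^sub>v w') = 0" by (rule test1[OF ls' VC x(1) vx x(3) w' nw' ixw' z BV])
    moreover have "ip z (A *\<^sub>v w') = complex_of_real (\<Sum>k<n. if k = 0 then 0 else (cmod ((A *\<^sub>v w') $ k))\<^sup>2)"
      unfolding ip_def z_def of_real_sum using A by (intro sum.cong) (auto simp del: of_real_power simp: complex_norm_square)
    ultimately have s0: "(\<Sum>k<n. if k = 0 then 0 else (cmod ((A *\<^sub>v w') $ k))\<^sup>2) = 0"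
      by (metis of_real_eq_0_iff)
    have "\<forall>k\<in>{..<n}. (if k = 0 then 0 else (cmod ((A *\<^sub>v w') $ k))\<^sup>2) = 0"
      using s0 by (subst sum_nonneg_eq_0_iff[symmetric]) auto
    then have "(if i = 0 then 0 else (cmod ((A *\<^sub>v w') $ i))\<^sup>2) = 0" using i by blast
    then have "(cmod ((A *\<^sub>v w') $ i))\<^sup>2 = 0" using i by (simp del: index_mult_mat_vec)
    then have "(A *\<^sub>v w') $ i = 0" by (simp del: index_mult_mat_vec)
    moreover have "(A *\<^sub>v w') $ i = complex_of_real (1 / vnorm w) * (A *\<^sub>v w) $ i"
      unfolding w'_def nrm_def using A w i by (simp add: mv_smult)
    moreover have "vnorm w > 0" by (rule vnorm_pos[OF wnz])
    ultimately show ?thesis by simp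
  qed
  have row0: "\<forall>j<n. A $$ (0,j) = 0" if y0: "y $ 0 = 0"
  proof (rule ccontr)
    assume "\<not> (\<forall>j<n. A $$ (0,j) = 0)"
    define u where "u = Matrix.vec n (\<lambda>j. cnj (A $$ (0,j)))"
    have u: "u \<in> carrier_vec n" unfolding u_def by simp
    obtain j0 where j0: "j0 < n" "A $$ (0,j0) \<noteq> 0" using \<open>\<not> (\<forall>j<n. A $$ (0,j) = 0)\<close> by blast
    have unz: "u \<noteq> 0\<^sub>v (dim_vec u)"
    proof
      assume "u = 0\<^sub>v (dim_vec u)"
      then have "u $ j0 = 0" using j0 u by simp
      then show False using j0 unfolding u_def by simp
    qed
    have hu: "(A *\<^sub>v v) $ 0 = ip v u" if v: "v \<in> carrier_vec n" for v
      unfolding mv_index[OF A v n0] ip_def u_def using v by (intro sum.cong) (auto simp: mult.commute)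
    have ixu: "ip x u = 0" using hu[OF x(1)] y0 unfolding y_def by simp
    define w' where "w' = nrm u"
    have w': "w' \<in> carrier_vec n" unfolding w'_def using u by simp
    have nw': "nsq w' = 1" unfolding w'_def by (rule nsq_nrm[OF unz])
    have ixw': "ip x w' = 0" unfolding w'_def using ip_nrm_right[of x u] x u ixu by simp
    have vu: "vnorm u > 0" by (rule vnorm_pos[OF unz])
    have BV: "outer (unit_vec n 0) w' \<in> V" unfolding V_def Vp_iff[OF p1]
    proof (intro conjI allI impI)
      show "outer (unit_vec n 0) w' \<in> carrier_mat n n" using w' by simp
      fix j assume j: "j < n" "p - 1 \<le> j"
      have "outer (unit_vec n 0) w' $$ (0,j) = unit_vec n 0 $ 0 * cnj (w' $ j)"
        by (rule outer_index) (use w' n0 j in auto)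
      also have "w' $ j = complex_of_real (1 / vnorm u) * u $ j" unfolding w'_def
        by (rule nrm_index) (use u j in simp)
      also have "u $ j = 0" unfolding u_def using j AVi by simp
      finally show "outer (unit_vec n 0) w' $$ (0, j) = 0" by simp
    qed
    have "ip (unit_vec n 0) (A *\<^sub>v w') = 0" by (rule test1[OF ls' VC x(1) vx x(3) w' nw' ixw' _ BV]) simp
    moreover have "ip (unit_vec n 0) (A *\<^sub>v w') = cnj (ip w' u)"
    proof -
      have "ip (unit_vec n 0) (A *\<^sub>v w') = cnj ((A *\<^sub>v w') $ 0)"
        by (rule ip_unit0[OF _ n0]) (use A w' in simp)
      then show ?thesis using hu[OF w'] by simp
    qed
    moreover have "ip w' u = complex_of_real (1 / vnorm u) * complex_of_real (nsq u)"
      unfolding w'_def ip_nrm_left ip_self ..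
    moreover have "nsq u > 0" using vu by (simp add: vnorm_nsq)
    ultimately show False using vu by simp
  qed
  have F3: "(A *\<^sub>v w) $ 0 = 0" if w: "w \<in> carrier_vec n" "ip w x = 0" for w
  proof (cases "y $ 0 = 0")
    case True
    then show ?thesis using row0 A w n0 by (simp add: mv_index[OF A w(1) n0])
  next
    case False
    have fo: "ip (A *\<^sub>v w) (A *\<^sub>v x) = 0" by (rule first_order[OF A x w])
    have "ip (A *\<^sub>v w) y = (\<Sum>k<n. if k = 0 then (A *\<^sub>v w) $ 0 * cnj (y $ 0) else 0)"
      unfolding ip_def using A F1[OF w] by (intro sum.cong) auto
    also have "\<dots> = (A *\<^sub>v w) $ 0 * cnj (y $ 0)" using n0 by simp
    finally have "(A *\<^sub>v w) $ 0 * cnj (y $ 0) = 0" using fo unfolding y_def by simp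
    then show ?thesis using False by simp
  qed
  have F4: "A *\<^sub>v w = 0\<^sub>v n" if w: "w \<in> carrier_vec n" "ip w x = 0" for w
  proof (rule eq_vecI)
    show "dim_vec (A *\<^sub>v w) = dim_vec (0\<^sub>v n)" using A by simp
    fix i assume "i < dim_vec (0\<^sub>v n)"
    then have i: "i < n" by simp
    show "(A *\<^sub>v w) $ i = 0\<^sub>v n $ i"
    proof (cases "i = 0")
      case True then show ?thesis using F3[OF w] i by simp
    next
      case False then show ?thesis using F1[OF w, of i] i by simp
    qed
  qed
  have F5: "A *\<^sub>v v = ip v x \<cdot>\<^sub>v y" if v: "v \<in> carrier_vec n" for v
  proof -
    define a where "a = ip v x"
    define r where "r = v + (- a) \<cdot>\<^sub>v x"
    have r: "r \<in> carrier_vec n" unfolding r_def using v x by simp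
    have dec: "v = a \<cdot>\<^sub>v x + r" unfolding r_def by (rule vdecomp[OF v x(1)])
    have ixx: "ip x x = 1" using nx by (rule ip_self_one)
    have "ip r x = ip v x + ip ((- a) \<cdot>\<^sub>v x) x" unfolding r_def by (rule ip_add_left) (use v x in simp)
    then have rx: "ip r x = 0" unfolding ip_smult_left ixx a_def by simp
    have "A *\<^sub>v v = A *\<^sub>v (a \<cdot>\<^sub>v x) + A *\<^sub>v r" by (subst dec, rule mult_add_distrib_mat_vec[OF A]) (use x r in simp_all)
    also have "A *\<^sub>v (a \<cdot>\<^sub>v x) = a \<cdot>\<^sub>v y" unfolding y_def by (rule mv_smult[OF A x(1)])
    also have "A *\<^sub>v r = 0\<^sub>v n" by (rule F4[OF r rx])
    finally show ?thesis unfolding a_def using y by simp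
  qed
  show ?thesis using x y nx pos F5 unfolding y_def by blast
qed


lemma ip_unit: assumes "v \<in> carrier_vec n" "j < n"
  shows "ip (unit_vec n j) v = cnj (v $ j)"
proof -
  have "ip (unit_vec n j) v = (\<Sum>i<n. if i = j then cnj (v $ j) else 0)"
    unfolding ip_def using assms by (intro sum.cong) auto
  then show ?thesis using assms by simp
qed

lemma exists_nz_entry: fixes x :: "complex Matrix.vec" assumes "x \<in> carrier_vec n" "nsq x = 1"
  shows "\<exists>k<n. x $ k \<noteq> 0"
proof (rule ccontr)
  assume "\<not> (\<exists>k<n. x $ k \<noteq> 0)"
  then have "x = 0\<^sub>v n" using assms(1) by (intro eq_vecI) auto
  then have "nsq x = 0" using nsq_zero_iff[of x] assms(1) by simp
  then show False using assms(2) by simp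
qed

locale ro_setup =
  fixes n p :: nat and A :: "complex mat" and x y :: "complex Matrix.vec"
  assumes p: "2 \<le> p" "p \<le> n" and ls: "left_symmetric (Vp n p) A"
    and x: "x \<in> carrier_vec n" and y: "y \<in> carrier_vec n" and nx: "nsq x = 1"
    and Axy: "A *\<^sub>v x = y" and vy: "vnorm y = opnorm A" and pos: "opnorm A > 0"
    and F5: "\<And>v. v \<in> carrier_vec n \<Longrightarrow> A *\<^sub>v v = ip v x \<cdot>\<^sub>v y"
begin

lemma AV: "A \<in> Vp n p" using ls unfolding left_symmetric_def by simp
lemma A: "A \<in> carrier_mat n n" using AV Vp_carrier by auto
lemma p1: "1 \<le> p" using p by simp
lemma n0: "0 < n" using p by simp
lemma VC: "Vp n p \<subseteq> carrier_mat n n" by (rule Vp_carrier)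

lemma entries: "i < n \<Longrightarrow> j < n \<Longrightarrow> A $$ (i,j) = y $ i * cnj (x $ j)"
proof -
  assume ij: "i < n" "j < n"
  have "A $$ (i,j) = (A *\<^sub>v unit_vec n j) $ i" by (rule mv_unit[OF A ij, symmetric])
  also have "\<dots> = ip (unit_vec n j) x * y $ i" unfolding F5[OF unit_vec_carrier] using ij y by simp
  also have "ip (unit_vec n j) x = cnj (x $ j)" by (rule ip_unit[OF x ij(2)])
  finally show ?thesis by simp
qed

lemma ynz: "y \<noteq> 0\<^sub>v n"
proof
  assume "y = 0\<^sub>v n"
  then have "nsq y = 0" using nsq_zero_iff[of y] y by simp
  then show False using vy pos by (simp add: vnorm_nsq)
qed

lemma row0: "j < n \<Longrightarrow> p - 1 \<le> j \<Longrightarrow> y $ 0 * cnj (x $ j) = 0"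
  using AV entries[OF n0] unfolding Vp_iff[OF p1] by auto

lemma Am0: "m \<in> carrier_vec n \<Longrightarrow> ip m x = 0 \<Longrightarrow> A *\<^sub>v m = 0\<^sub>v n"
  using F5 y by (intro eq_vecI) auto

lemma vx: "vnorm x = 1" using nx by (rule nsq_one_vnorm)

lemma vAx: "vnorm (A *\<^sub>v x) = opnorm A" using vy Axy by simp

lemma m_exists:
  assumes "k' < n" "x $ k' \<noteq> 0" "j' < n" "k' \<noteq> j'"
  shows "\<exists>m. m \<in> carrier_vec n \<and> nsq m = 1 \<and> ip m x = 0 \<and> A *\<^sub>v m = 0\<^sub>v n \<and>
     (\<forall>i<n. i \<noteq> k' \<and> i \<noteq> j' \<longrightarrow> m $ i = 0)"
proof -
  define q where "q = ov x n k' j'"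
  note qp = ov_props[OF x assms(1,3,4,2), folded q_def]
  have qnz: "q \<noteq> 0\<^sub>v (dim_vec q)" using qp(1,2) by simp
  define m where "m = nrm q"
  have m: "m \<in> carrier_vec n" unfolding m_def using qp(1) by simp
  have nm: "nsq m = 1" unfolding m_def by (rule nsq_nrm[OF qnz])
  have mx: "ip m x = 0" unfolding m_def ip_nrm_left qp(3) by simp
  have "\<forall>i<n. i \<noteq> k' \<and> i \<noteq> j' \<longrightarrow> m $ i = 0"
    using qp(1,4) unfolding m_def by (auto simp: nrm_index)
  then show ?thesis using m nm mx Am0[OF m mx] by blast
qed

lemma B_entry0:
  assumes z1: "z1 \<in> carrier_vec n" and z2: "z2 \<in> carrier_vec n" and m: "m \<in> carrier_vec n"
    and j: "j < n"
  shows "(outer (5 \<cdot>\<^sub>v z1) m + outer z2 (4 \<cdot>\<^sub>v x + 3 \<cdot>\<^sub>v m)) $$ (0,j)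
     = 5 * z1 $ 0 * cnj (m $ j) + z2 $ 0 * cnj ((4 \<cdot>\<^sub>v x + 3 \<cdot>\<^sub>v m) $ j)"
proof -
  have u: "4 \<cdot>\<^sub>v x + 3 \<cdot>\<^sub>v m \<in> carrier_vec n" using x m by simp
  have c1: "outer (5 \<cdot>\<^sub>v z1) m \<in> carrier_mat n n" using z1 m by simp
  have c2: "outer z2 (4 \<cdot>\<^sub>v x + 3 \<cdot>\<^sub>v m) \<in> carrier_mat n n" using z2 u by simp
  have "(outer (5 \<cdot>\<^sub>v z1) m + outer z2 (4 \<cdot>\<^sub>v x + 3 \<cdot>\<^sub>v m)) $$ (0,j)
      = outer (5 \<cdot>\<^sub>v z1) m $$ (0,j) + outer z2 (4 \<cdot>\<^sub>v x + 3 \<cdot>\<^sub>v m) $$ (0,j)"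
    using c1 c2 n0 j by simp
  also have "outer (5 \<cdot>\<^sub>v z1) m $$ (0,j) = (5 \<cdot>\<^sub>v z1) $ 0 * cnj (m $ j)"
    by (rule outer_index) (use z1 m n0 j in auto)
  also have "outer z2 (4 \<cdot>\<^sub>v x + 3 \<cdot>\<^sub>v m) $$ (0,j) = z2 $ 0 * cnj ((4 \<cdot>\<^sub>v x + 3 \<cdot>\<^sub>v m) $ j)"
    by (rule outer_index[OF z2 u n0 j])
  finally show ?thesis using z1 n0 by simp
qed

lemma Ra: assumes n3: "3 \<le> n" and k: "1 \<le> k" "k < n" "y $ k \<noteq> 0"
  shows False
proof -
  define j where "j = (if k = 1 then 2 else 1::nat)"
  have j: "1 \<le> j" "j < n" "k \<noteq> j" unfolding j_def using k n3 by auto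
  define y' where "y' = Matrix.vec n (\<lambda>i. if i = 0 then 0 else y $ i)"
  have y': "y' \<in> carrier_vec n" unfolding y'_def by simp
  have y'k: "y' $ k = y $ k" unfolding y'_def using k by simp
  have y'nz: "y' \<noteq> 0\<^sub>v (dim_vec y')" using y'k k y' by auto
  define q where "q = ov y n k j"
  note qp = ov_props[OF y k(2) j(2,3) k(3), folded q_def]
  have qnz: "q \<noteq> 0\<^sub>v (dim_vec q)" using qp(1,2) by simp
  define z1 where "z1 = nrm y'"
  define z2 where "z2 = nrm q"
  have z1: "z1 \<in> carrier_vec n" "nsq z1 = 1" unfolding z1_def using y' nsq_nrm[OF y'nz] by auto
  have z2: "z2 \<in> carrier_vec n" "nsq z2 = 1" unfolding z2_def using qp(1) nsq_nrm[OF qnz] by auto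
  have iyq: "ip y' q = 0"
  proof -
    have "ip y' q = (\<Sum>i<n. (if i = k then y $ k * y $ j else 0) + (if i = j then - (y $ j * y $ k) else 0))"
      unfolding ip_def using y' qp(1,4,5,6) k j by (intro sum.cong) (auto simp: y'_def)
    also have "\<dots> = 0" using k j by (simp add: sum.distrib)
    finally show ?thesis .
  qed
  have o: "ip z1 z2 = 0" unfolding z1_def z2_def ip_nrm_left
    using ip_nrm_right[of y' q] iyq y' qp(1) by simp
  have y2: "ip z2 (A *\<^sub>v x) = 0" unfolding Axy z2_def ip_nrm_left qp(3) by simp
  have iyy: "ip y' y = complex_of_real (nsq y')"
  proof -
    have "ip y' y = ip y' y'" unfolding ip_def using y y' by (intro sum.cong) (auto simp: y'_def)
    then show ?thesis by (simp add: ip_self)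
  qed
  have "nsq y' > 0" using vnorm_pos[OF y'nz] by (simp add: vnorm_nsq)
  moreover have "vnorm y' > 0" by (rule vnorm_pos[OF y'nz])
  ultimately have y1: "ip z1 (A *\<^sub>v x) \<noteq> 0" unfolding Axy z1_def ip_nrm_left iyy by simp
  obtain k' where k': "k' < n" "x $ k' \<noteq> 0" using exists_nz_entry[OF x nx] by blast
  define j' where "j' = (if k' = 0 then 1 else 0::nat)"
  have j': "j' < n" "k' \<noteq> j'" unfolding j'_def using n3 by auto
  obtain m where m: "m \<in> carrier_vec n" "nsq m = 1" "ip m x = 0" "A *\<^sub>v m = 0\<^sub>v n"
    using m_exists[OF k' j'] by blast
  have z10: "z1 $ 0 = 0" unfolding z1_def using y' n0 by (simp add: nrm_index y'_def)
  have z20: "z2 $ 0 = 0" unfolding z2_def using qp(1) qp(4)[of 0] n0 k j by (simp add: nrm_index)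
  have BV: "outer (5 \<cdot>\<^sub>v z1) m + outer z2 (4 \<cdot>\<^sub>v x + 3 \<cdot>\<^sub>v m) \<in> Vp n p"
    unfolding Vp_iff[OF p1] using z1 z2 m x B_entry0[OF z1(1) z2(1) m(1)] z10 z20 by simp
  show False by (rule test2[OF ls VC x nx vAx m z1 z2 o y2 y1 BV])
qed

lemma Rb: assumes p3: "3 \<le> p" and yk: "\<And>i. 1 \<le> i \<Longrightarrow> i < n \<Longrightarrow> y $ i = 0"
  shows False
proof -
  have y0: "y $ 0 \<noteq> 0"
  proof
    assume "y $ 0 = 0"
    have "y = 0\<^sub>v n"
    proof (rule eq_vecI)
      fix i assume "i < dim_vec (0\<^sub>v n)"
      then have i: "i < n" by simp
      show "y $ i = 0\<^sub>v n $ i"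
      proof (cases "i = 0")
        case True then show ?thesis using i \<open>y $ 0 = 0\<close> by simp
      next
        case False then show ?thesis using i yk[of i] by simp
      qed
    qed (use y in simp)
    then show False using ynz by simp
  qed
  have xz: "x $ j = 0" if "j < n" "p - 1 \<le> j" for j using row0[OF that] y0 by simp
  obtain k' where k': "k' < n" "x $ k' \<noteq> 0" using exists_nz_entry[OF x nx] by blast
  have k'p: "k' < p - 1" using xz[OF k'(1)] k' by force
  define j' where "j' = (if k' = 0 then 1 else 0::nat)"
  have j': "j' < n" "k' \<noteq> j'" "j' < p - 1" unfolding j'_def using p p3 by auto
  obtain m where m: "m \<in> carrier_vec n" "nsq m = 1" "ip m x = 0" "A *\<^sub>v m = 0\<^sub>v n"
      and msupp: "\<forall>i<n. i \<noteq> k' \<and> i \<noteq> j' \<longrightarrow> m $ i = 0"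
    using m_exists[OF k' j'(1,2)] by blast
  define z1 where "z1 = (unit_vec n 0 :: complex Matrix.vec)"
  define z2 where "z2 = (unit_vec n 1 :: complex Matrix.vec)"
  have n1: "1 < n" using p p3 by simp
  have z1: "z1 \<in> carrier_vec n" "nsq z1 = 1" unfolding z1_def using nsq_unit n0 by auto
  have z2: "z2 \<in> carrier_vec n" "nsq z2 = 1" unfolding z2_def using nsq_unit n1 by auto
  have o: "ip z1 z2 = 0" unfolding z1_def z2_def using ip_unit[of "unit_vec n 1" n 0] n0 n1 by simp
  have y2: "ip z2 (A *\<^sub>v x) = 0" unfolding Axy z2_def using ip_unit[OF y n1] yk[of 1] n1 by simp
  have y1: "ip z1 (A *\<^sub>v x) \<noteq> 0" unfolding Axy z1_def using ip_unit[OF y n0] y0 by simp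
  have BV: "outer (5 \<cdot>\<^sub>v z1) m + outer z2 (4 \<cdot>\<^sub>v x + 3 \<cdot>\<^sub>v m) \<in> Vp n p"
    unfolding Vp_iff[OF p1]
  proof (intro conjI allI impI)
    show "outer (5 \<cdot>\<^sub>v z1) m + outer z2 (4 \<cdot>\<^sub>v x + 3 \<cdot>\<^sub>v m) \<in> carrier_mat n n" using z1 z2 m x by simp
    fix j assume j: "j < n" "p - 1 \<le> j"
    have "m $ j = 0" using msupp j k'p j' by auto
    then show "(outer (5 \<cdot>\<^sub>v z1) m + outer z2 (4 \<cdot>\<^sub>v x + 3 \<cdot>\<^sub>v m)) $$ (0, j) = 0"
      unfolding B_entry0[OF z1(1) z2(1) m(1) j(1)] using n0 n1 by (simp add: z1_def z2_def)
  qed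
  show False by (rule test2[OF ls VC x nx vAx m z1 z2 o y2 y1 BV])
qed

lemma R2: assumes p2: "p = 2" and yk: "\<And>i. 1 \<le> i \<Longrightarrow> i < n \<Longrightarrow> y $ i = 0"
  shows "A = (y $ 0 * cnj (x $ 0)) \<cdot>\<^sub>m E11 n"
proof -
  have y0: "y $ 0 \<noteq> 0"
  proof
    assume "y $ 0 = 0"
    have "y = 0\<^sub>v n"
    proof (rule eq_vecI)
      fix i assume "i < dim_vec (0\<^sub>v n)"
      then have i: "i < n" by simp
      show "y $ i = 0\<^sub>v n $ i"
      proof (cases "i = 0")
        case True then show ?thesis using i \<open>y $ 0 = 0\<close> by simp
      next
        case False then show ?thesis using i yk[of i] by simp
      qed
    qed (use y in simp)
    then show False using ynz by simp
  qed
  have xz: "x $ j = 0" if "j < n" "1 \<le> j" for j using row0[of j] that y0 p2 by simp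
  show ?thesis
  proof (rule eq_matI)
    fix i j assume ij: "i < dim_row ((y $ 0 * cnj (x $ 0)) \<cdot>\<^sub>m E11 n)" "j < dim_col ((y $ 0 * cnj (x $ 0)) \<cdot>\<^sub>m E11 n)"
    then have ij': "i < n" "j < n" by (auto simp: E11_def)
    show "A $$ (i, j) = ((y $ 0 * cnj (x $ 0)) \<cdot>\<^sub>m E11 n) $$ (i, j)"
      unfolding entries[OF ij'] using ij' xz yk by (cases "i = 0"; cases "j = 0") (auto simp: E11_def)
  qed (use A in \<open>auto simp: E11_def\<close>)
qed

end


lemma E11_carrier[simp]: "E11 n \<in> carrier_mat n n" unfolding E11_def by simp

lemma E11_mv: assumes v: "v \<in> carrier_vec n" and n0: "0 < n"
  shows "(c \<cdot>\<^sub>m E11 n) *\<^sub>v v = (c * v $ 0) \<cdot>\<^sub>v unit_vec n 0"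
proof (rule eq_vecI)
  show "dim_vec ((c \<cdot>\<^sub>m E11 n) *\<^sub>v v) = dim_vec ((c * v $ 0) \<cdot>\<^sub>v unit_vec n 0)" by (simp add: E11_def)
  fix i assume "i < dim_vec ((c * v $ 0) \<cdot>\<^sub>v unit_vec n 0)"
  then have i: "i < n" by simp
  have "((c \<cdot>\<^sub>m E11 n) *\<^sub>v v) $ i = (\<Sum>j<n. (c \<cdot>\<^sub>m E11 n) $$ (i,j) * v $ j)"
    by (rule mv_index[OF _ v i]) simp
  also have "\<dots> = (\<Sum>j<n. if j = 0 then (if i = 0 then c * v $ 0 else 0) else 0)"
    using i by (intro sum.cong) (auto simp: E11_def)
  also have "\<dots> = (if i = 0 then c * v $ 0 else 0)" using n0 by simp
  finally show "((c \<cdot>\<^sub>m E11 n) *\<^sub>v v) $ i = ((c * v $ 0) \<cdot>\<^sub>v unit_vec n 0) $ i" using i n0 by simp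
qed

lemma ip_unit_right: assumes "(v::complex Matrix.vec) \<in> carrier_vec n" "j < n"
  shows "ip v (unit_vec n j) = v $ j"
  using ip_cnj[of v "unit_vec n j"] ip_unit[OF assms] assms by simp

lemma E11_ls: assumes n2: "2 \<le> n"
  shows "left_symmetric (Vp n 2) (c \<cdot>\<^sub>m E11 n)"
  unfolding left_symmetric_def
proof (intro conjI ballI impI)
  have n0: "0 < n" using n2 by simp
  define A where "A = c \<cdot>\<^sub>m E11 n"
  have A: "A \<in> carrier_mat n n" unfolding A_def by simp
  show "c \<cdot>\<^sub>m E11 n \<in> Vp n 2" unfolding Vp_iff[of 2, simplified] by (auto simp: E11_def)
  fix B assume BV: "B \<in> Vp n 2" and orth: "bj_orth (c \<cdot>\<^sub>m E11 n) B"
  have B: "B \<in> carrier_mat n n" using BV Vp_carrier by auto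
  have Brow: "\<And>j. j < n \<Longrightarrow> 1 \<le> j \<Longrightarrow> B $$ (0,j) = 0" using BV unfolding Vp_iff[of 2, simplified] by auto
  have e0: "(unit_vec n 0 :: complex Matrix.vec) \<in> carrier_vec n" "nsq (unit_vec n 0 :: complex Matrix.vec) = 1"
    using nsq_unit[OF n0] by auto
  have Av: "A *\<^sub>v v = (c * v $ 0) \<cdot>\<^sub>v unit_vec n 0" if "v \<in> carrier_vec n" for v
    unfolding A_def by (rule E11_mv[OF that n0])
  have B00: "B $$ (0,0) = 0" if c0: "c \<noteq> 0"
  proof (rule ccontr)
    assume b0: "B $$ (0,0) \<noteq> 0"
    have "\<not> bj_orth A B"
    proof (rule nonorth[OF A B e0(1) e0(2), of "(cmod c)\<^sup>2"])
      show "0 < (cmod c)\<^sup>2" using c0 by simp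
      fix v :: "complex Matrix.vec" assume v: "v \<in> carrier_vec n"
      have "nsq (A *\<^sub>v v) = (cmod c)\<^sup>2 * (cmod (v $ 0))\<^sup>2" unfolding Av[OF v] nsq_smult e0(2)
        by (simp add: norm_mult power_mult_distrib)
      moreover have "nsq (A *\<^sub>v unit_vec n 0) = (cmod c)\<^sup>2" unfolding Av[OF e0(1)] nsq_smult e0(2) using n0 by simp
      moreover have "ip v (unit_vec n 0) = v $ 0" by (rule ip_unit_right[OF v n0])
      ultimately show "nsq (A *\<^sub>v v) \<le> nsq (A *\<^sub>v unit_vec n 0) * nsq v - (cmod c)\<^sup>2 * (nsq v - (cmod (ip v (unit_vec n 0)))\<^sup>2)"
        by (simp add: algebra_simps)
    next
      have "ip (A *\<^sub>v unit_vec n 0) (B *\<^sub>v unit_vec n 0) = c * ip (unit_vec n 0) (B *\<^sub>v unit_vec n 0)"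
        unfolding Av[OF e0(1)] using n0 by (simp add: ip_smult_left)
      also have "ip (unit_vec n 0) (B *\<^sub>v unit_vec n 0) = cnj ((B *\<^sub>v unit_vec n 0) $ 0)"
        by (rule ip_unit[OF _ n0]) (use B in simp)
      also have "(B *\<^sub>v unit_vec n 0) $ 0 = B $$ (0,0)" by (rule mv_unit[OF B n0 n0])
      finally show "ip (A *\<^sub>v unit_vec n 0) (B *\<^sub>v unit_vec n 0) \<noteq> 0" using c0 b0 by simp
    qed
    then show False using orth unfolding A_def by simp
  qed
  have Bv0: "c = 0 \<or> (B *\<^sub>v v) $ 0 = 0" if v: "v \<in> carrier_vec n" for v
  proof (cases "c = 0")
    case False
    have "(B *\<^sub>v v) $ 0 = (\<Sum>j<n. B $$ (0,j) * v $ j)" by (rule mv_index[OF B v n0])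
    also have "\<dots> = 0" using B00[OF False] Brow by (intro sum.neutral) (metis less_one mult_zero_left not_le lessThan_iff)
    finally show ?thesis by simp
  qed simp
  show "bj_orth B (c \<cdot>\<^sub>m E11 n)" unfolding bj_orth_def A_def[symmetric]
  proof
    fix l :: complex
    show "opnorm B \<le> opnorm (B + l \<cdot>\<^sub>m A)"
    proof (rule opnorm_mono[OF B])
      show "B + l \<cdot>\<^sub>m A \<in> carrier_mat n n" using A B by simp
      fix v :: "complex Matrix.vec" assume v: "v \<in> carrier_vec n"
      have e: "(B + l \<cdot>\<^sub>m A) *\<^sub>v v = B *\<^sub>v v + (l * (c * v $ 0)) \<cdot>\<^sub>v unit_vec n 0"
        unfolding mv_add_smult[OF B A v] Av[OF v] by (simp add: smult_smult_assoc)
      have "ip (B *\<^sub>v v) ((l * (c * v $ 0)) \<cdot>\<^sub>v unit_vec n 0) = cnj (l * (c * v $ 0)) * ip (B *\<^sub>v v) (unit_vec n 0)"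
        by (rule ip_smult_right) (use B in simp)
      also have "ip (B *\<^sub>v v) (unit_vec n 0) = (B *\<^sub>v v) $ 0"
        by (rule ip_unit_right[OF mult_mat_vec_carrier[OF B v] n0])
      also have "cnj (l * (c * v $ 0)) * (B *\<^sub>v v) $ 0 = 0"
      proof (cases "c = 0")
        case True then show ?thesis by simp
      next
        case False then have "(B *\<^sub>v v) $ 0 = 0" using Bv0[OF v] by blast
        then show ?thesis by (simp only: mult_zero_right)
      qed
      finally have cr: "ip (B *\<^sub>v v) ((l * (c * v $ 0)) \<cdot>\<^sub>v unit_vec n 0) = 0" .
      have "nsq ((B + l \<cdot>\<^sub>m A) *\<^sub>v v) = nsq (B *\<^sub>v v) + nsq ((l * (c * v $ 0)) \<cdot>\<^sub>v unit_vec n 0)"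
        unfolding e using cr by (subst nsq_add) (use B in simp_all)
      then have "nsq (B *\<^sub>v v) \<le> nsq ((B + l \<cdot>\<^sub>m A) *\<^sub>v v)" using nsq_nonneg by simp
      then show "vnorm (B *\<^sub>v v) \<le> vnorm ((B + l \<cdot>\<^sub>m A) *\<^sub>v v)" by (simp add: vnorm_nsq)
    qed
  qed
qed


lemma vec_nz_entry: fixes y :: "complex Matrix.vec"
  assumes "y \<in> carrier_vec n" "y \<noteq> 0\<^sub>v n" shows "\<exists>k<n. y $ k \<noteq> 0"
proof (rule ccontr)
  assume "\<not> (\<exists>k<n. y $ k \<noteq> 0)"
  then have "y = 0\<^sub>v n" using assms(1) by (intro eq_vecI) auto
  then show False using assms(2) by simp
qed

theorem lemma3p5:
  fixes n p :: nat
  assumes "2 \<le> n" and "2 \<le> p" and "p \<le> n"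
  shows "(3 \<le> p \<longrightarrow> (\<forall>A. left_symmetric (Vp n p) A \<longrightarrow> A = 0\<^sub>m n n))
       \<and> (p = 2 \<longrightarrow>
            (\<exists>A. left_symmetric (Vp n 2) A \<and> A \<noteq> 0\<^sub>m n n)
          \<and> (\<forall>A. left_symmetric (Vp n 2) A \<and> A \<noteq> 0\<^sub>m n n \<longrightarrow> vec_space.rank n A = 1))
       \<and> (p = 2 \<and> 3 \<le> n \<longrightarrow>
            (\<forall>A \<in> Vp n 2. left_symmetric (Vp n 2) A \<longleftrightarrow> (\<exists>c::complex. A = c \<cdot>\<^sub>m E11 n)))"
proof -
  have n0: "0 < n" using assms by simp
  have part1: "3 \<le> p \<longrightarrow> (\<forall>A. left_symmetric (Vp n p) A \<longrightarrow> A = 0\<^sub>m n n)"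
  proof (intro impI allI)
    fix A assume p3: "3 \<le> p" and ls: "left_symmetric (Vp n p) A"
    show "A = 0\<^sub>m n n"
    proof (rule ccontr)
      assume nz: "A \<noteq> 0\<^sub>m n n"
      obtain x y where xy: "x \<in> carrier_vec n" "y \<in> carrier_vec n" "nsq x = 1" "A *\<^sub>v x = y"
        "vnorm y = opnorm A" "opnorm A > 0" "\<forall>v\<in>carrier_vec n. A *\<^sub>v v = ip v x \<cdot>\<^sub>v y"
        using structure_lemma[OF assms(2,3) ls nz] by blast
      have ro: "ro_setup n p A x y" unfolding ro_setup_def using assms ls xy by blast
      interpret r: ro_setup n p A x y by (rule ro)
      show False
      proof (cases "\<exists>k. 1 \<le> k \<and> k < n \<and> y $ k \<noteq> 0")
        case True
        then obtain k where "1 \<le> k" "k < n" "y $ k \<noteq> 0" by blast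
        then show False using r.Ra[of k] p3 assms by simp
      next
        case False
        then show False using r.Rb[OF p3] by blast
      qed
    qed
  qed
  have part2: "p = 2 \<longrightarrow> (\<exists>A. left_symmetric (Vp n 2) A \<and> A \<noteq> 0\<^sub>m n n)
          \<and> (\<forall>A. left_symmetric (Vp n 2) A \<and> A \<noteq> 0\<^sub>m n n \<longrightarrow> vec_space.rank n A = 1)"
  proof (intro impI conjI allI)
    have "left_symmetric (Vp n 2) (1 \<cdot>\<^sub>m E11 n)" by (rule E11_ls[OF assms(1)])
    moreover have "1 \<cdot>\<^sub>m E11 n \<noteq> 0\<^sub>m n n"
    proof
      assume "1 \<cdot>\<^sub>m E11 n = 0\<^sub>m n n"
      then have "(1 \<cdot>\<^sub>m E11 n) $$ (0,0) = (0\<^sub>m n n :: complex mat) $$ (0,0)" by simp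
      then show False using n0 by (simp add: E11_def)
    qed
    ultimately show "\<exists>A. left_symmetric (Vp n 2) A \<and> A \<noteq> 0\<^sub>m n n" by blast
  next
    fix A assume "left_symmetric (Vp n 2) A \<and> A \<noteq> 0\<^sub>m n n"
    then have ls: "left_symmetric (Vp n 2) A" and nz: "A \<noteq> 0\<^sub>m n n" by auto
    obtain x y where xy: "x \<in> carrier_vec n" "y \<in> carrier_vec n" "nsq x = 1" "A *\<^sub>v x = y"
      "vnorm y = opnorm A" "opnorm A > 0" "\<forall>v\<in>carrier_vec n. A *\<^sub>v v = ip v x \<cdot>\<^sub>v y"
      using structure_lemma[OF order_refl assms(1) ls nz] by blast
    have ro: "ro_setup n 2 A x y" unfolding ro_setup_def using assms ls xy by blast
    interpret r: ro_setup n 2 A x y by (rule ro)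
    obtain k where k: "k < n" "y $ k \<noteq> 0" using vec_nz_entry[OF xy(2) r.ynz] by blast
    obtain k' where k': "k' < n" "x $ k' \<noteq> 0" using exists_nz_entry[OF xy(1) xy(3)] by blast
    have "A $$ (k,k') \<noteq> 0" using r.entries[OF k(1) k'(1)] k k' by simp
    then show "vec_space.rank n A = 1"
      by (rule rank_one[OF r.A _ k(1) k'(1), of "\<lambda>i. y $ i" "\<lambda>j. cnj (x $ j)"]) (rule r.entries)
  qed
  have part3: "p = 2 \<and> 3 \<le> n \<longrightarrow>
            (\<forall>A \<in> Vp n 2. left_symmetric (Vp n 2) A \<longleftrightarrow> (\<exists>c::complex. A = c \<cdot>\<^sub>m E11 n))"
  proof (intro impI ballI iffI)
    fix A assume "p = 2 \<and> 3 \<le> n" "A \<in> Vp n 2" "\<exists>c::complex. A = c \<cdot>\<^sub>m E11 n"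
    then show "left_symmetric (Vp n 2) A" using E11_ls[OF assms(1)] by blast
  next
    fix A assume h: "p = 2 \<and> 3 \<le> n" and AV: "A \<in> Vp n 2" and ls: "left_symmetric (Vp n 2) A"
    show "\<exists>c::complex. A = c \<cdot>\<^sub>m E11 n"
    proof (cases "A = 0\<^sub>m n n")
      case True
      have "A = 0 \<cdot>\<^sub>m E11 n" unfolding True by (rule eq_matI) (auto simp: E11_def)
      then show ?thesis by blast
    next
      case nz: False
      obtain x y where xy: "x \<in> carrier_vec n" "y \<in> carrier_vec n" "nsq x = 1" "A *\<^sub>v x = y"
        "vnorm y = opnorm A" "opnorm A > 0" "\<forall>v\<in>carrier_vec n. A *\<^sub>v v = ip v x \<cdot>\<^sub>v y"
        using structure_lemma[OF order_refl assms(1) ls nz] by blast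
      have ro: "ro_setup n 2 A x y" unfolding ro_setup_def using assms ls xy by blast
    interpret r: ro_setup n 2 A x y by (rule ro)
      show ?thesis
      proof (cases "\<exists>k. 1 \<le> k \<and> k < n \<and> y $ k \<noteq> 0")
        case True
        then obtain k where "1 \<le> k" "k < n" "y $ k \<noteq> 0" by blast
        then show ?thesis using r.Ra[of k] h by simp
      next
        case False
        then have "A = (y $ 0 * cnj (x $ 0)) \<cdot>\<^sub>m E11 n" using r.R2 by blast
        then show ?thesis by blast
      qed
    qed
  qed
  show ?thesis using part1 part2 part3 by blast
qed


end
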